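(* For a positive integer $N$, let $\mathcal S_2$ be the set of pairs $(A,B)$ of $3\times 3$ matrices with entries in $[-N,N]\cap\mathbb{Z}$, written \[ A = \begin{pmatrix} a_1 & a_2 & a_3 \\ a_4 & a_5 & a_6 \\ a_7 & a_8 & a_9 \end{pmatrix},\qquad B = \begin{pmatrix} b_1 & b_2 & b_3 \\ b_4 & b_5 & b_6 \\ b_7 & b_8 & b_9 \end{pmatrix}, \] such that $AB=BA$ and the $6\times 4$ matrix \[ M = \begin{pmatrix} -b_2 & a_2 & 0 & 0 \\ b_4 & -a_4 & 0 & 0 \\ 0 & 0 & -b_3 & a_3 \\ 0 & 0 & b_7 & -a_7 \\ b_8 & -a_8 & -b_8 & a_8 \\ -b_6 & a_6 & b_6 & -a_6 \end{pmatrix} \] has rank $2$. Then $|\mathcal S_2|\le CN^{10}$ for an absolute constant $C>0$ and all $N\ge 1$. *)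

theory Defs
  imports "HOL-Analysis.Analysis"
begin

text \<open>Entries of a 3x3 integer matrix A, numbered a_1..a_9 row-wise.
  Rows/columns are indexed by the type 3 with elements 1, 2, 3.\<close>
definition ent :: "int^3^3 \<Rightarrow> nat \<Rightarrow> int" where
  "ent A k = A $ (of_nat ((k - 1) div 3 + 1)) $ (of_nat ((k - 1) mod 3 + 1))"

text \<open>The 6x4 matrix M built from A and B (real entries, to use the library rank).\<close>
definition Mmat :: "int^3^3 \<Rightarrow> int^3^3 \<Rightarrow> real^4^6" where
  "Mmat A B = (let a = (\<lambda>k. real_of_int (ent A k)); b = (\<lambda>k. real_of_int (ent B k));
     rows = [[- b 2, a 2, 0, 0],
             [b 4, - a 4, 0, 0],
             [0, 0, - b 3, a 3],
             [0, 0, b 7, - a 7],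
             [b 8, - a 8, - b 8, a 8],
             [- b 6, a 6, b 6, - a 6]]
   in (\<chi> i j. rows ! (nat (Rep_bit0 i)) ! (nat (Rep_bit0 j))))"

definition S2 :: "nat \<Rightarrow> ((int^3^3) \<times> (int^3^3)) set" where
  "S2 N = {p. (\<forall>i j. \<bar>fst p $ i $ j\<bar> \<le> int N \<and> \<bar>snd p $ i $ j\<bar> \<le> int N)
                  \<and> fst p ** snd p = snd p ** fst p \<and> rank (Mmat (fst p) (snd p)) = 2}"

end

theory Submission
  imports Defs
begin

type_synonym v2 = "int \<times> int"

definition det2 :: "v2 \<Rightarrow> v2 \<Rightarrow> int" where
  "det2 u v = fst u * snd v - snd u * fst v"

definition sqbox :: "nat \<Rightarrow> v2 set" where
  "sqbox K = {- int K..int K} \<times> {- int K..int K}"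

lemma finite_box[simp]: "finite (sqbox K)"
  by (simp add: sqbox_def)

lemma card_box: "card (sqbox K) = (2*K+1)^2"
proof -
  have "card {- int K..int K} = 2*K+1" by simp
  then show ?thesis by (simp add: sqbox_def card_cartesian_product power2_eq_square)
qed

lemma line_card:
  assumes "u \<noteq> (0,0)"
  shows "card {y \<in> sqbox K. det2 u y = c} \<le> 2*K+1"
proof (cases "fst u = 0")
  case False
  have "inj_on fst {y \<in> sqbox K. det2 u y = c}"
  proof (rule inj_onI)
    fix x y assume x: "x \<in> {y \<in> sqbox K. det2 u y = c}" and y: "y \<in> {y \<in> sqbox K. det2 u y = c}"
      and e: "fst x = fst y"
    have "fst u * snd x - snd u * fst x = fst u * snd y - snd u * fst y" using x y by (simp add: det2_def)
    then have "fst u * (snd x - snd y) = 0" using e by (simp add: algebra_simps)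
    then have "snd x = snd y" using False by simp
    then show "x = y" using e by (simp add: prod_eq_iff)
  qed
  moreover have "fst ` {y \<in> sqbox K. det2 u y = c} \<subseteq> {- int K..int K}"
    by (auto simp: sqbox_def)
  ultimately have "card {y \<in> sqbox K. det2 u y = c} \<le> card {- int K..int K}"
    by (intro card_inj_on_le) auto
  then show ?thesis by simp
next
  case True
  then have T: "snd u \<noteq> 0" using assms by (cases u) auto
  have "inj_on snd {y \<in> sqbox K. det2 u y = c}"
  proof (rule inj_onI)
    fix x y assume x: "x \<in> {y \<in> sqbox K. det2 u y = c}" and y: "y \<in> {y \<in> sqbox K. det2 u y = c}"
      and e: "snd x = snd y"
    have "fst u * snd x - snd u * fst x = fst u * snd y - snd u * fst y" using x y by (simp add: det2_def)
    then have "snd u * (fst x - fst y) = 0" using e True by (simp add: algebra_simps)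
    then have "fst x = fst y" using T by simp
    then show "x = y" using e by (simp add: prod_eq_iff)
  qed
  moreover have "snd ` {y \<in> sqbox K. det2 u y = c} \<subseteq> {- int K..int K}"
    by (auto simp: sqbox_def)
  ultimately have "card {y \<in> sqbox K. det2 u y = c} \<le> card {- int K..int K}"
    by (intro card_inj_on_le) auto
  then show ?thesis by simp
qed

lemma line_card':
  assumes "u \<noteq> (0,0)" "A \<subseteq> {y \<in> sqbox K. det2 u y = c}"
  shows "card A \<le> 2*K+1" "finite A"
  using line_card[OF assms(1), of K c] card_mono[OF _ assms(2)] finite_subset[OF assms(2)]
  by auto

lemma card3:
  fixes S :: "('q \<times> 'a \<times> 'b) set"
  assumes fO: "finite Os"
    and S: "\<And>q a b. (q,a,b) \<in> S \<Longrightarrow> q \<in> Os \<and> a \<in> Y q \<and> b \<in> Z q a"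
    and Y: "\<And>q. q \<in> Os \<Longrightarrow> finite (Y q) \<and> card (Y q) \<le> m1"
    and Z: "\<And>q a. q \<in> Os \<Longrightarrow> a \<in> Y q \<Longrightarrow> finite (Z q a) \<and> card (Z q a) \<le> m2"
  shows "card S \<le> card Os * m1 * m2"
proof -
  have sub: "S \<subseteq> Sigma Os (\<lambda>q. Sigma (Y q) (Z q))"
    using S by auto
  have fin: "finite (Sigma Os (\<lambda>q. Sigma (Y q) (Z q)))"
    using fO Y Z by (intro finite_SigmaI) auto
  have "card S \<le> card (Sigma Os (\<lambda>q. Sigma (Y q) (Z q)))"
    by (rule card_mono[OF fin sub])
  also have "\<dots> = (\<Sum>q\<in>Os. \<Sum>a\<in>Y q. card (Z q a))"
    using fO Y Z by (simp add: card_SigmaI finite_SigmaI)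
  also have "\<dots> \<le> (\<Sum>q\<in>Os. \<Sum>a\<in>Y q. m2)"
    using Z by (intro sum_mono) auto
  also have "\<dots> = (\<Sum>q\<in>Os. card (Y q) * m2)" by simp
  also have "\<dots> \<le> (\<Sum>q\<in>Os. m1 * m2)"
    using Y by (intro sum_mono mult_right_mono) auto
  also have "\<dots> = card Os * m1 * m2" by simp
  finally show ?thesis .
qed

lemma card3_swap:
  fixes S :: "('q \<times> 'a \<times> 'b) set"
  assumes fO: "finite Os"
    and S: "\<And>q a b. (q,a,b) \<in> S \<Longrightarrow> q \<in> Os \<and> b \<in> Y q \<and> a \<in> Z q b"
    and Y: "\<And>q. q \<in> Os \<Longrightarrow> finite (Y q) \<and> card (Y q) \<le> m1"
    and Z: "\<And>q b. q \<in> Os \<Longrightarrow> b \<in> Y q \<Longrightarrow> finite (Z q b) \<and> card (Z q b) \<le> m2"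
  shows "card S \<le> card Os * m1 * m2"
proof -
  let ?f = "\<lambda>(q::'q,a::'a,b::'b). (q,b,a)"
  have inj: "inj_on ?f S" by (auto simp: inj_on_def)
  have "card (?f ` S) \<le> card Os * m1 * m2"
    by (rule card3[OF fO _ Y Z]) (auto dest: S)
  then show ?thesis using card_image[OF inj] by simp
qed

definition fj :: "int \<Rightarrow> real" where "fj j = 1 / (max 1 \<bar>real_of_int j\<bar>)^2"

lemma sum_fj: "(\<Sum>j\<in>{- int K..int K}. fj j) \<le> 5 - 4 / (real K + 1)"
proof (induction K)
  case 0
  then show ?case by (simp add: fj_def)
next
  case (Suc K)
  have set: "{- int (Suc K)..int (Suc K)} = insert (- int (Suc K)) (insert (int (Suc K)) {- int K..int K})"
    by auto
  have "(\<Sum>j\<in>{- int (Suc K)..int (Suc K)}. fj j) = fj (- int (Suc K)) + fj (int (Suc K)) + (\<Sum>j\<in>{- int K..int K}. fj j)"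
    unfolding set by simp
  also have "fj (- int (Suc K)) = 1 / (real K + 1)^2" by (simp add: fj_def)
  also have "fj (int (Suc K)) = 1 / (real K + 1)^2" by (simp add: fj_def)
  finally have e: "(\<Sum>j\<in>{- int (Suc K)..int (Suc K)}. fj j) = 2 / (real K + 1)^2 + (\<Sum>j\<in>{- int K..int K}. fj j)"
    by simp
  have "2 / (real K + 1)^2 + (5 - 4 / (real K + 1)) \<le> 5 - 4 / (real (Suc K) + 1)"
  proof -
    have k: "real K \<ge> 0" by simp
    have "4 / (real K + 1) - 4 / (real K + 2) = 4 / ((real K + 1) * (real K + 2))"
      by (simp add: field_simps)
    also have "\<dots> \<ge> 4 / (2 * (real K + 1)^2)"
    proof (rule divide_left_mono)
      show "(real K + 1) * (real K + 2) \<le> 2 * (real K + 1)^2"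
        using k by (simp add: power2_eq_square algebra_simps)
    qed (use k in auto)
    also have "4 / (2 * (real K + 1)^2) = 2 / (real K + 1)^2" by simp
    finally have "2 / (real K + 1)^2 \<le> 4 / (real K + 1) - 4 / (real K + 2)" .
    moreover have "4 / (real (Suc K) + 1) = 4 / (real K + 2)" by (simp add: add.commute)
    ultimately show ?thesis by linarith
  qed
  then show ?case using e Suc by simp
qed

lemma sum_fj5: "(\<Sum>j\<in>{- int K..int K}. fj j) \<le> 5"
  using sum_fj[of K] by (smt (verit) divide_nonneg_nonneg of_nat_0_le_iff)

definition hgt :: "v2 \<Rightarrow> nat" where "hgt d = nat (max \<bar>fst d\<bar> \<bar>snd d\<bar>)"

lemma fj_pos: "fj j \<ge> 0" by (simp add: fj_def)

lemma inv_hgt: assumes "d \<noteq> (0,0)" shows "1 / real (hgt d)^8 \<le> fj (fst d) * fj (snd d)"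
proof -
  obtain a b where d: "d = (a,b)" by fastforce
  have h: "real (hgt d) = max \<bar>real_of_int a\<bar> \<bar>real_of_int b\<bar>" using d by (simp add: hgt_def)
  have h1: "real (hgt d) \<ge> 1" using assms d by (auto simp: hgt_def)
  have ma: "max 1 \<bar>real_of_int a\<bar> \<le> real (hgt d)" using h h1 by simp
  have mb: "max 1 \<bar>real_of_int b\<bar> \<le> real (hgt d)" using h h1 by simp
  have "(max 1 \<bar>real_of_int a\<bar>)^2 * (max 1 \<bar>real_of_int b\<bar>)^2 \<le> real (hgt d)^2 * real (hgt d)^2"
    using ma mb by (intro mult_mono power_mono) auto
  also have "\<dots> \<le> real (hgt d)^8"
  proof -
    have "real (hgt d)^4 \<le> real (hgt d)^8" using h1 by (intro power_increasing) auto
    then show ?thesis by (simp add: power_add[symmetric])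
  qed
  finally have le: "(max 1 \<bar>real_of_int a\<bar>)^2 * (max 1 \<bar>real_of_int b\<bar>)^2 \<le> real (hgt d)^8" .
  have pos: "0 < (max 1 \<bar>real_of_int a\<bar>)^2 * (max 1 \<bar>real_of_int b\<bar>)^2" by simp
  have "1 / real (hgt d)^8 \<le> 1 / ((max 1 \<bar>real_of_int a\<bar>)^2 * (max 1 \<bar>real_of_int b\<bar>)^2)"
    using pos h1 by (intro divide_left_mono[OF le]) (simp_all add: mult_pos_pos)
  then show ?thesis using d by (simp add: fj_def)
qed

lemma sum_inv_hgt: "(\<Sum>d\<in>sqbox K - {(0,0)}. 1 / real (hgt d)^8) \<le> 25"
proof -
  have "(\<Sum>d\<in>sqbox K - {(0,0)}. 1 / real (hgt d)^8) \<le> (\<Sum>d\<in>sqbox K - {(0,0)}. fj (fst d) * fj (snd d))"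
    by (intro sum_mono inv_hgt) auto
  also have "\<dots> \<le> (\<Sum>d\<in>sqbox K. fj (fst d) * fj (snd d))"
    by (intro sum_mono2) (auto intro: mult_nonneg_nonneg fj_pos)
  also have "\<dots> = (\<Sum>j\<in>{- int K..int K}. fj j) * (\<Sum>j\<in>{- int K..int K}. fj j)"
    by (simp add: sqbox_def sum_product sum.cartesian_product split_def)
  also have "\<dots> \<le> 5 * 5"
    using sum_fj5[of K] by (intro mult_mono) (auto intro: sum_nonneg fj_pos)
  finally show ?thesis by simp
qed

definition prim :: "v2 \<Rightarrow> v2" where
  "prim u = (fst u div gcd (fst u) (snd u), snd u div gcd (fst u) (snd u))"

lemma prim_mult:
  assumes "u \<noteq> (0,0)" "det2 u v = 0"
  shows "\<exists>t. v = (t * fst (prim u), t * snd (prim u))"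
proof -
  obtain p q where u: "u = (p,q)" by fastforce
  obtain x y where v: "v = (x,y)" by fastforce
  define g where "g = gcd p q"
  have g0: "g \<noteq> 0" using assms u by (simp add: g_def)
  define p' where "p' = p div g"
  define q' where "q' = q div g"
  have pp: "p = g * p'" by (simp add: p'_def g_def)
  have qq: "q = g * q'" by (simp add: q'_def g_def)
  have cop: "coprime p' q'" unfolding p'_def q'_def g_def
    using assms u by (intro div_gcd_coprime) auto
  have eq0: "p * y = q * x" using assms u v by (simp add: det2_def)
  then have eq: "p' * y = q' * x" using g0 pp qq by (simp add: mult.assoc)
  have pr: "prim u = (p', q')" using u by (simp add: prim_def p'_def q'_def g_def)
  show ?thesis
  proof (cases "p' = 0")
    case True
    then have "is_unit q'" using cop by simp
    then have "q' = 1 \<or> q' = -1" using zdvd1_eq[of q'] by (simp add: abs_if split: if_splits)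
    then have q1: "q' * q' = 1" by auto
    have x0: "x = 0" using eq True \<open>is_unit q'\<close> by auto
    show ?thesis
      by (rule exI[of _ "y * q'"]) (simp add: pr v True x0 mult.assoc q1)
  next
    case False
    have "p' dvd q' * x" using eq by (metis dvd_triv_left)
    then have "p' dvd x" using cop by (simp add: coprime_dvd_mult_right_iff)
    then obtain t where t: "x = p' * t" by (auto elim: dvdE)
    have "p' * y = p' * (q' * t)" using eq t by (simp add: algebra_simps)
    then have "y = q' * t" using False by simp
    then show ?thesis using t by (intro exI[of _ t]) (simp add: pr v algebra_simps)
  qed
qed

lemma prim_box:
  assumes "u \<in> sqbox K" "u \<noteq> (0,0)"
  shows "prim u \<in> sqbox K" "prim u \<noteq> (0,0)"
proof -
  obtain p q where u: "u = (p,q)" by fastforce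
  define g where "g = gcd p q"
  have g0: "g \<noteq> 0" using assms u g_def by simp
  have "g \<ge> 0" using g_def by simp
  then have g1: "g \<ge> 1" using g0 by linarith
  have pe: "p = g * (p div g)" by (simp add: g_def)
  have qe: "q = g * (q div g)" by (simp add: g_def)
  have a1: "\<bar>p div g\<bar> \<le> \<bar>p\<bar>"
  proof -
    have "\<bar>p\<bar> = \<bar>g\<bar> * \<bar>p div g\<bar>" using pe by (metis abs_mult)
    also have "\<bar>g\<bar> = g" using g1 by simp
    finally have e: "\<bar>p\<bar> = g * \<bar>p div g\<bar>" .
    have "1 * \<bar>p div g\<bar> \<le> g * \<bar>p div g\<bar>" by (rule mult_right_mono) (use g1 in auto)
    then show ?thesis using e by simp
  qed
  have a2: "\<bar>q div g\<bar> \<le> \<bar>q\<bar>"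
  proof -
    have "\<bar>q\<bar> = \<bar>g\<bar> * \<bar>q div g\<bar>" using qe by (metis abs_mult)
    also have "\<bar>g\<bar> = g" using g1 by simp
    finally have e: "\<bar>q\<bar> = g * \<bar>q div g\<bar>" .
    have "1 * \<bar>q div g\<bar> \<le> g * \<bar>q div g\<bar>" by (rule mult_right_mono) (use g1 in auto)
    then show ?thesis using e by simp
  qed
  have pr: "prim u = (p div g, q div g)" using u by (simp add: prim_def g_def)
  show "prim u \<in> sqbox K" using assms(1) a1 a2 u pr by (auto simp: sqbox_def abs_le_iff)
  show "prim u \<noteq> (0,0)" using assms(2) u pr pe qe by auto
qed

definition Ld :: "nat \<Rightarrow> v2 \<Rightarrow> v2 set" where
  "Ld K d = {v \<in> sqbox K. \<exists>t. v = (t * fst d, t * snd d)}"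

lemma Ld_card:
  assumes "d \<noteq> (0,0)"
  shows "card (Ld K d) \<le> 2 * (K div hgt d) + 1"
proof -
  let ?h = "hgt d"
  let ?m = "K div hgt d"
  have h0: "hgt d > 0" using assms by (cases d) (auto simp: hgt_def)
  have sub: "Ld K d \<subseteq> (\<lambda>t. (t * fst d, t * snd d)) ` {- int ?m..int ?m}"
  proof
    fix v assume v: "v \<in> Ld K d"
    then obtain t where t: "v = (t * fst d, t * snd d)" and vb: "v \<in> sqbox K" by (auto simp: Ld_def)
    have b1: "\<bar>t\<bar> * \<bar>fst d\<bar> \<le> int K" using vb t by (auto simp: sqbox_def abs_mult abs_le_iff)
    have b2: "\<bar>t\<bar> * \<bar>snd d\<bar> \<le> int K" using vb t by (auto simp: sqbox_def abs_mult abs_le_iff)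
    have hh: "int ?h = max \<bar>fst d\<bar> \<bar>snd d\<bar>" by (simp add: hgt_def)
    have "\<bar>t\<bar> * int ?h \<le> int K" using b1 b2 hh by (simp add: max_def)
    moreover have "int (nat \<bar>t\<bar> * ?h) = \<bar>t\<bar> * int ?h" by simp
    ultimately have "int (nat \<bar>t\<bar> * ?h) \<le> int K" by linarith
    then have "nat \<bar>t\<bar> * ?h \<le> K" by (simp only: of_nat_le_iff)
    then have "nat \<bar>t\<bar> \<le> ?m" using h0 by (simp add: less_eq_div_iff_mult_less_eq)
    then have "t \<in> {- int ?m..int ?m}" by auto
    then show "v \<in> (\<lambda>t. (t * fst d, t * snd d)) ` {- int ?m..int ?m}" using t by auto
  qed
  have "card (Ld K d) \<le> card ((\<lambda>t. (t * fst d, t * snd d)) ` {- int ?m..int ?m})"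
    by (rule card_mono[OF _ sub]) simp
  also have "\<dots> \<le> card {- int ?m..int ?m}" by (rule card_image_le) simp
  also have "\<dots> = 2 * ?m + 1" by simp
  finally show ?thesis .
qed

lemma Ld_card_real:
  assumes "d \<noteq> (0,0)" "d \<in> sqbox K"
  shows "real (card (Ld K d)) \<le> 3 * real K / real (hgt d)"
proof -
  have h0: "hgt d > 0" using assms by (cases d) (auto simp: hgt_def)
  have hK: "hgt d \<le> K" using assms(2) by (cases d) (auto simp: hgt_def sqbox_def)
  have "real (card (Ld K d)) \<le> 2 * real (K div hgt d) + 1"
  proof -
    have "real (card (Ld K d)) \<le> real (2 * (K div hgt d) + 1)"
      by (rule of_nat_mono[OF Ld_card[OF assms(1), of K]])
    then show ?thesis by simp
  qed
  also have "real (K div hgt d) \<le> real K / real (hgt d)" by (rule of_nat_div_le_of_nat)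
  also have "1 \<le> real K / real (hgt d)" using h0 hK by simp
  finally show ?thesis by simp
qed

definition vecs8 :: "((v2\<times>v2)\<times>(v2\<times>v2)\<times>(v2\<times>v2))\<times>v2\<times>v2 \<Rightarrow> v2 list" where
  "vecs8 x = [fst (fst (fst x)), snd (fst (fst x)), fst (fst (snd (fst x))), snd (fst (snd (fst x))),
     fst (snd (snd (fst x))), snd (snd (snd (fst x))), fst (snd x), snd (snd x)]"

definition Tset :: "nat \<Rightarrow> v2 \<Rightarrow> (((v2\<times>v2)\<times>(v2\<times>v2)\<times>(v2\<times>v2))\<times>v2\<times>v2) set" where
  "Tset K d = ((Ld K d \<times> Ld K d) \<times> (Ld K d \<times> Ld K d) \<times> (Ld K d \<times> Ld K d)) \<times> Ld K d \<times> Ld K d"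

lemma common_card:
  assumes "\<And>x. x \<in> S \<Longrightarrow> set (vecs8 x) \<subseteq> sqbox K \<and> (\<exists>u\<in>sqbox K. u \<noteq> (0,0) \<and> (\<forall>c\<in>set (vecs8 x). det2 u c = 0))"
  shows "real (card S) \<le> 3^8 * 25 * real K ^ 8"
proof -
  have sub: "S \<subseteq> (\<Union>d\<in>sqbox K - {(0,0)}. Tset K d)"
  proof
    fix x assume x: "x \<in> S"
    then obtain u where u: "u \<in> sqbox K" "u \<noteq> (0,0)" "\<forall>c\<in>set (vecs8 x). det2 u c = 0"
      using assms[OF x] by blast
    have xb: "set (vecs8 x) \<subseteq> sqbox K" using assms[OF x] by blast
    have inL: "c \<in> Ld K (prim u)" if cin: "c \<in> set (vecs8 x)" for c
    proof -
      obtain t where "c = (t * fst (prim u), t * snd (prim u))"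
        using prim_mult[OF u(2) u(3)[rule_format, OF cin]] by blast
      then show ?thesis using xb cin by (auto simp: Ld_def)
    qed
    have "x \<in> Tset K (prim u)"
      using inL by (simp add: Tset_def mem_Times_iff vecs8_def)
    moreover have "prim u \<in> sqbox K - {(0,0)}" using prim_box[OF u(1,2)] by simp
    ultimately show "x \<in> (\<Union>d\<in>sqbox K - {(0,0)}. Tset K d)" by blast
  qed
  have fin: "finite (Tset K d)" for d
    by (simp add: Tset_def Ld_def)
  have "card S \<le> card (\<Union>d\<in>sqbox K - {(0,0)}. Tset K d)"
    by (rule card_mono[OF _ sub]) (simp add: fin)
  also have "\<dots> \<le> (\<Sum>d\<in>sqbox K - {(0,0)}. card (Tset K d))"
    by (rule card_UN_le) simp
  finally have "real (card S) \<le> real (\<Sum>d\<in>sqbox K - {(0,0)}. card (Tset K d))"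
    by (rule of_nat_mono)
  also have "\<dots> = (\<Sum>d\<in>sqbox K - {(0,0)}. real (card (Tset K d)))"
    by (rule of_nat_sum)
  also have "\<dots> \<le> (\<Sum>d\<in>sqbox K - {(0,0)}. (3 * real K)^8 * (1 / real (hgt d)^8))"
  proof (rule sum_mono)
    fix d assume d: "d \<in> sqbox K - {(0,0)}"
    have "real (card (Tset K d)) = real (card (Ld K d)) ^ 8"
      by (simp add: Tset_def card_cartesian_product numeral_eq_Suc)
    also have "\<dots> \<le> (3 * real K / real (hgt d)) ^ 8"
      using Ld_card_real[of d K] d by (intro power_mono) auto
    also have "\<dots> = (3 * real K)^8 * (1 / real (hgt d)^8)" by (simp add: power_divide)
    finally show "real (card (Tset K d)) \<le> (3 * real K)^8 * (1 / real (hgt d)^8)" .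
  qed
  also have "\<dots> = (3 * real K)^8 * (\<Sum>d\<in>sqbox K - {(0,0)}. 1 / real (hgt d)^8)"
    by (simp add: sum_distrib_left)
  also have "\<dots> \<le> (3 * real K)^8 * 25"
    by (intro mult_left_mono sum_inv_hgt) simp
  finally show ?thesis by (simp add: power_mult_distrib)
qed

definition sub2 :: "v2 \<Rightarrow> v2 \<Rightarrow> v2" where "sub2 u v = (fst u - fst v, snd u - snd v)"

lemma det2_sub2: "det2 w (sub2 a b) = det2 w a - det2 w b"
  by (simp add: det2_def sub2_def algebra_simps)

definition QE :: "nat \<Rightarrow> v2 \<Rightarrow> v2 \<Rightarrow> v2 \<Rightarrow> v2 \<Rightarrow> v2 \<Rightarrow> v2 \<Rightarrow> v2 \<Rightarrow> v2 \<Rightarrow> bool" where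
  "QE K w2 w4 w3 w7 w8 w6 y1 y2 \<longleftrightarrow>
    w2 \<in> sqbox K \<and> w4 \<in> sqbox K \<and> w3 \<in> sqbox K \<and> w7 \<in> sqbox K \<and> w8 \<in> sqbox K \<and> w6 \<in> sqbox K \<and>
    y1 \<in> sqbox K \<and> y2 \<in> sqbox K \<and>
    det2 w2 y1 + det2 w3 w8 = 0 \<and> det2 w4 y1 = det2 w6 w7 \<and>
    det2 w3 y2 + det2 w2 w6 = 0 \<and> det2 w7 y2 = det2 w8 w4 \<and>
    det2 w6 (sub2 y1 y2) = det2 w4 w3 \<and> det2 w8 (sub2 y1 y2) + det2 w7 w2 = 0"

definition QR :: "v2 \<Rightarrow> v2 \<Rightarrow> v2 \<Rightarrow> v2 \<Rightarrow> v2 \<Rightarrow> v2 \<Rightarrow> bool" where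
  "QR w2 w4 w3 w7 w8 w6 \<longleftrightarrow>
    (det2 w2 w4 \<noteq> 0 \<longrightarrow> w3 = (0,0) \<and> w7 = (0,0) \<and> w8 = (0,0) \<and> w6 = (0,0)) \<and>
    (det2 w3 w7 \<noteq> 0 \<longrightarrow> w2 = (0,0) \<and> w4 = (0,0) \<and> w8 = (0,0) \<and> w6 = (0,0)) \<and>
    (det2 w8 w6 \<noteq> 0 \<longrightarrow> w2 = (0,0) \<and> w4 = (0,0) \<and> w3 = (0,0) \<and> w7 = (0,0)) \<and>
    (\<forall>u\<in>{w2,w4}. \<forall>v\<in>{w3,w7}. \<forall>w\<in>{w8,w6}. u \<noteq> (0,0) \<longrightarrow> v \<noteq> (0,0) \<longrightarrow> w \<noteq> (0,0) \<longrightarrow>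
       det2 u w = 0 \<and> det2 v w = 0)"

definition QP :: "nat \<Rightarrow> v2 \<Rightarrow> v2 \<Rightarrow> v2 \<Rightarrow> v2 \<Rightarrow> v2 \<Rightarrow> v2 \<Rightarrow> v2 \<Rightarrow> v2 \<Rightarrow> bool" where
  "QP K w2 w4 w3 w7 w8 w6 y1 y2 \<longleftrightarrow> QE K w2 w4 w3 w7 w8 w6 y1 y2 \<and> QR w2 w4 w3 w7 w8 w6"

type_synonym tup6 = "(v2\<times>v2)\<times>(v2\<times>v2)\<times>(v2\<times>v2)"

abbreviation "W2 (q::tup6) \<equiv> fst (fst q)"
abbreviation "W4 (q::tup6) \<equiv> snd (fst q)"
abbreviation "W3 (q::tup6) \<equiv> fst (fst (snd q))"
abbreviation "W7 (q::tup6) \<equiv> snd (fst (snd q))"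
abbreviation "W8 (q::tup6) \<equiv> fst (snd (snd q))"
abbreviation "W6 (q::tup6) \<equiv> snd (snd (snd q))"

definition Q :: "nat \<Rightarrow> (tup6 \<times> v2 \<times> v2) set" where
  "Q K = {(q,y1,y2). QP K (W2 q) (W4 q) (W3 q) (W7 q) (W8 q) (W6 q) y1 y2}"

definition nz :: "v2 \<times> v2 \<Rightarrow> bool" where "nz p \<longleftrightarrow> fst p \<noteq> (0,0) \<or> snd p \<noteq> (0,0)"

definition CP :: "nat \<Rightarrow> (v2 \<times> v2) set" where "CP K = {p \<in> sqbox K \<times> sqbox K. det2 (fst p) (snd p) = 0}"

lemma finite_CP[simp]: "finite (CP K)" by (simp add: CP_def)

lemma card_CP: "card (CP K) \<le> 2 * (2*K+1)^3"
proof -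
  have sub: "CP K \<subseteq> ({(0,0)} \<times> sqbox K) \<union> Sigma (sqbox K - {(0,0)}) (\<lambda>u. {y \<in> sqbox K. det2 u y = 0})"
    by (auto simp: CP_def)
  have "card (CP K) \<le> card (({(0,0)} \<times> sqbox K) \<union> Sigma (sqbox K - {(0,0)}) (\<lambda>u. {y \<in> sqbox K. det2 u y = 0}))"
    by (rule card_mono[OF _ sub]) auto
  also have "\<dots> \<le> card ({(0::int,0::int)} \<times> sqbox K) + card (Sigma (sqbox K - {(0,0)}) (\<lambda>u. {y \<in> sqbox K. det2 u y = 0}))"
    by (rule card_Un_le)
  also have "card ({(0::int,0::int)} \<times> sqbox K) = (2*K+1)^2" by (simp add: card_cartesian_product card_box)
  also have "card (Sigma (sqbox K - {(0,0)}) (\<lambda>u. {y \<in> sqbox K. det2 u y = 0})) = (\<Sum>u\<in>sqbox K - {(0,0)}. card {y \<in> sqbox K. det2 u y = 0})"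
    by (rule card_SigmaI) auto
  also have "\<dots> \<le> (\<Sum>u\<in>sqbox K - {(0,0)}. 2*K+1)"
    by (intro sum_mono line_card) auto
  also have "\<dots> \<le> (\<Sum>u\<in>sqbox K. 2*K+1)"
    by (intro sum_mono2) auto
  also have "\<dots> = (2*K+1)^3" by (simp add: card_box power_def numeral_eq_Suc)
  finally have "card (CP K) \<le> (2*K+1)^2 + (2*K+1)^3" by simp
  also have "(2*K+1)^2 \<le> (2*K+1)^3" by (intro power_increasing) auto
  finally show ?thesis by simp
qed

lemma two_line:
  assumes "a \<noteq> (0,0) \<or> b \<noteq> (0,0)"
  shows "finite {y \<in> sqbox K. det2 a y = c1 \<and> det2 b y = c2} \<and> card {y \<in> sqbox K. det2 a y = c1 \<and> det2 b y = c2} \<le> 2*K+1"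
proof (cases "a \<noteq> (0,0)")
  case True
  show ?thesis using line_card'[OF True, of "{y \<in> sqbox K. det2 a y = c1 \<and> det2 b y = c2}" K c1] by auto
next
  case False
  then have b: "b \<noteq> (0,0)" using assms by auto
  show ?thesis using line_card'[OF b, of "{y \<in> sqbox K. det2 a y = c1 \<and> det2 b y = c2}" K c2] by auto
qed

definition line1 :: "nat \<Rightarrow> tup6 \<Rightarrow> v2 set" where
  "line1 K q = {y \<in> sqbox K. det2 (W2 q) y = - det2 (W3 q) (W8 q) \<and> det2 (W4 q) y = det2 (W6 q) (W7 q)}"
definition line2 :: "nat \<Rightarrow> tup6 \<Rightarrow> v2 set" where
  "line2 K q = {y \<in> sqbox K. det2 (W3 q) y = - det2 (W2 q) (W6 q) \<and> det2 (W7 q) y = det2 (W8 q) (W4 q)}"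
definition line3 :: "nat \<Rightarrow> tup6 \<Rightarrow> v2 \<Rightarrow> v2 set" where
  "line3 K q y1 = {y \<in> sqbox K. det2 (W6 q) y = det2 (W6 q) y1 - det2 (W4 q) (W3 q) \<and> det2 (W8 q) y = det2 (W8 q) y1 + det2 (W7 q) (W2 q)}"
definition line4 :: "nat \<Rightarrow> tup6 \<Rightarrow> v2 \<Rightarrow> v2 set" where
  "line4 K q y2 = {y \<in> sqbox K. det2 (W6 q) y = det2 (W6 q) y2 + det2 (W4 q) (W3 q) \<and> det2 (W8 q) y = det2 (W8 q) y2 - det2 (W7 q) (W2 q)}"

lemma Q_lines:
  assumes "(q,y1,y2) \<in> Q K"
  shows "y1 \<in> line1 K q" "y2 \<in> line2 K q" "y2 \<in> line3 K q y1" "y1 \<in> line4 K q y2"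
    "y1 \<in> sqbox K" "y2 \<in> sqbox K"
proof -
  have E: "QE K (W2 q) (W4 q) (W3 q) (W7 q) (W8 q) (W6 q) y1 y2" using assms by (simp add: Q_def QP_def)
  note E' = E[unfolded QE_def]
  show "y1 \<in> line1 K q" using E' unfolding line1_def by simp
  show "y2 \<in> line2 K q" using E' unfolding line2_def by simp
  show "y2 \<in> line3 K q y1" using E' unfolding line3_def det2_sub2 by simp
  show "y1 \<in> line4 K q y2" using E' unfolding line4_def det2_sub2 by simp
  show "y1 \<in> sqbox K" "y2 \<in> sqbox K" using E' by simp_all
qed

lemma line_cards:
  "nz (fst q) \<Longrightarrow> finite (line1 K q) \<and> card (line1 K q) \<le> 2*K+1"
  "nz (fst (snd q)) \<Longrightarrow> finite (line2 K q) \<and> card (line2 K q) \<le> 2*K+1"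
  "nz (snd (snd q)) \<Longrightarrow> finite (line3 K q y) \<and> card (line3 K q y) \<le> 2*K+1"
  "nz (snd (snd q)) \<Longrightarrow> finite (line4 K q y) \<and> card (line4 K q y) \<le> 2*K+1"
  unfolding line1_def line2_def line3_def line4_def
  by (rule two_line; auto simp: nz_def)+

lemma box_fc: "finite (sqbox K) \<and> card (sqbox K) \<le> (2*K+1)^2" by (simp add: card_box)

definition Qp :: "nat \<Rightarrow> bool \<Rightarrow> bool \<Rightarrow> bool \<Rightarrow> (tup6 \<times> v2 \<times> v2) set" where
  "Qp K bU bV bW = {x \<in> Q K. nz (fst (fst x)) = bU \<and> nz (fst (snd (fst x))) = bV \<and> nz (snd (snd (fst x))) = bW}"

abbreviation zz :: "v2 \<times> v2" where "zz \<equiv> ((0,0),(0,0))"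

lemma nz_zz: "\<not> nz p \<longleftrightarrow> p = zz" by (cases p) (auto simp: nz_def)

lemma Qp_mem:
  assumes "(q,a,b) \<in> Qp K bU bV bW"
  shows "QP K (W2 q) (W4 q) (W3 q) (W7 q) (W8 q) (W6 q) a b" "nz (fst q) = bU" "nz (fst (snd q)) = bV" "nz (snd (snd q)) = bW"
    "(q,a,b) \<in> Q K"
  using assms by (auto simp: Qp_def Q_def)

lemma card_TTF: "card (Qp K True True False) \<le> (2*(2*K+1)^3) * (2*(2*K+1)^3) * (2*K+1) * (2*K+1)"
proof -
  let ?Os = "{q \<in> CP K \<times> CP K \<times> {zz}. nz (fst q) \<and> nz (fst (snd q))}"
  have A: "card (Qp K True True False) \<le> card ?Os * (2*K+1) * (2*K+1)"
  proof (rule card3[where Y = "line1 K" and Z = "\<lambda>q a. line2 K q"])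
    fix q a b assume m: "(q,a,b) \<in> Qp K True True False"
    note M = Qp_mem[OF m]
    have "W3 q \<noteq> (0,0) \<or> W7 q \<noteq> (0,0)" using M(3) by (simp add: nz_def)
    then have c1: "det2 (W2 q) (W4 q) = 0" using M(1) unfolding QP_def QR_def by blast
    have "W2 q \<noteq> (0,0) \<or> W4 q \<noteq> (0,0)" using M(2) by (simp add: nz_def)
    then have c2: "det2 (W3 q) (W7 q) = 0" using M(1) unfolding QP_def QR_def by blast
    have z: "snd (snd q) = zz" using M(4) nz_zz by blast
    have bx: "W2 q \<in> sqbox K \<and> W4 q \<in> sqbox K \<and> W3 q \<in> sqbox K \<and> W7 q \<in> sqbox K"
      using M(1) unfolding QP_def QE_def by blast
    have "q \<in> ?Os" using M(2,3) c1 c2 z bx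
      by (auto simp: CP_def mem_Times_iff)
    then show "q \<in> ?Os \<and> a \<in> line1 K q \<and> b \<in> line2 K q" using Q_lines[OF M(5)] by blast
  next
    fix q assume "q \<in> ?Os" then show "finite (line1 K q) \<and> card (line1 K q) \<le> 2*K+1"
      using line_cards(1) by blast
  next
    fix q a assume "q \<in> ?Os" then show "finite (line2 K q) \<and> card (line2 K q) \<le> 2*K+1"
      using line_cards(2) by blast
  qed (simp add: finite_subset[of _ "CP K \<times> CP K \<times> {zz}"])
  have "card ?Os \<le> card (CP K \<times> CP K \<times> {zz})"
    by (rule card_mono) auto
  also have "\<dots> = card (CP K) * card (CP K)" by (simp add: card_cartesian_product)
  also have "\<dots> \<le> (2*(2*K+1)^3) * (2*(2*K+1)^3)" by (intro mult_mono card_CP) auto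
  finally have B: "card ?Os \<le> (2*(2*K+1)^3) * (2*(2*K+1)^3)" .
  show ?thesis using A mult_le_mono1[OF mult_le_mono1[OF B]] by (rule order_trans)
qed

lemma det2_self[simp]: "det2 a a = 0" by (simp add: det2_def)
lemma det2_zero[simp]: "det2 a (0,0) = 0" "det2 (0,0) a = 0" by (simp_all add: det2_def)
lemma det2_anti: "det2 a b = 0 \<Longrightarrow> det2 b a = 0" by (simp add: det2_def algebra_simps)

lemma col:
  assumes "u \<noteq> (0,0)" "det2 u a = 0" "det2 u b = 0"
  shows "det2 a b = 0"
proof -
  obtain u1 u2 where u: "u = (u1,u2)" by fastforce
  obtain a1 a2 where a: "a = (a1,a2)" by fastforce
  obtain b1 b2 where b: "b = (b1,b2)" by fastforce
  have e1: "u1 * a2 = u2 * a1" using assms(2) u a by (simp add: det2_def)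
  have e2: "u1 * b2 = u2 * b1" using assms(3) u b by (simp add: det2_def)
  have "u1 * (a1*b2 - a2*b1) = a1*(u1*b2) - b1*(u1*a2)" by (simp add: algebra_simps)
  also have "\<dots> = a1*(u2*b1) - b1*(u2*a1)" using e1 e2 by simp
  also have "\<dots> = 0" by (simp add: algebra_simps)
  finally have f1: "u1 * (a1*b2 - a2*b1) = 0" .
  have "u2 * (a1*b2 - a2*b1) = b2*(u2*a1) - a2*(u2*b1)" by (simp add: algebra_simps)
  also have "\<dots> = b2*(u1*a2) - a2*(u1*b2)" using e1 e2 by simp
  also have "\<dots> = 0" by (simp add: algebra_simps)
  finally have f2: "u2 * (a1*b2 - a2*b1) = 0" .
  have "u1 \<noteq> 0 \<or> u2 \<noteq> 0" using assms(1) u by auto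
  then have "a1*b2 - a2*b1 = 0" using f1 f2 by auto
  then show ?thesis using a b by (simp add: det2_def)
qed

lemma grp: "det2 a b = 0 \<Longrightarrow> x \<in> {a,b} \<Longrightarrow> y \<in> {a,b} \<Longrightarrow> det2 x y = 0"
  by (blast dest: det2_anti intro: det2_self)

lemma common_col:
  assumes Q: "QP K w2 w4 w3 w7 w8 w6 y1 y2"
    and nU: "w2 \<noteq> (0,0) \<or> w4 \<noteq> (0,0)" and nV: "w3 \<noteq> (0,0) \<or> w7 \<noteq> (0,0)"
    and nW: "w8 \<noteq> (0,0) \<or> w6 \<noteq> (0,0)"
  shows "\<exists>u\<in>sqbox K. u \<noteq> (0,0) \<and> (\<forall>c\<in>set [w2,w4,w3,w7,w8,w6,y1,y2]. det2 u c = 0)"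
proof -
  have QE: "QE K w2 w4 w3 w7 w8 w6 y1 y2" and QR: "QR w2 w4 w3 w7 w8 w6" using Q by (simp_all add: QP_def)
  note R = QR[unfolded QR_def]
  note F1 = R[THEN conjunct1] and F2 = R[THEN conjunct2, THEN conjunct1]
    and F3 = R[THEN conjunct2, THEN conjunct2, THEN conjunct1]
    and F4 = R[THEN conjunct2, THEN conjunct2, THEN conjunct2]
  have eqs: "det2 w2 y1 + det2 w3 w8 = 0" "det2 w4 y1 = det2 w6 w7"
    "det2 w3 y2 + det2 w2 w6 = 0" "det2 w7 y2 = det2 w8 w4" and ub0: "w2 \<in> sqbox K" "w4 \<in> sqbox K"
    using QE by (simp_all add: QE_def)
  obtain u where u: "u \<in> {w2,w4}" "u \<noteq> (0,0)" using nU by blast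
  obtain v where v: "v \<in> {w3,w7}" "v \<noteq> (0,0)" using nV by blast
  obtain w where w: "w \<in> {w8,w6}" "w \<noteq> (0,0)" using nW by blast
  have dU: "det2 w2 w4 = 0" using F1 nV by blast
  have dV: "det2 w3 w7 = 0" using F2 nU by blast
  have dW: "det2 w8 w6 = 0" using F3 nU by blast
  have uw: "det2 u w = 0" and vw: "det2 v w = 0" using F4[rule_format, OF u(1) v(1) w(1) u(2) v(2) w(2)] by blast+
  have ub: "u \<in> sqbox K" using u ub0 by blast
  have CU: "det2 u c = 0" if "c \<in> {w2,w4}" for c using grp[OF dU u(1) that] .
  have CW: "det2 u c = 0" if "c \<in> {w8,w6}" for c
    using col[OF w(2) det2_anti[OF uw] grp[OF dW w(1) that]] .
  have uv: "det2 u v = 0" using col[OF w(2) det2_anti[OF uw] det2_anti[OF vw]] .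
  have CV: "det2 u c = 0" if "c \<in> {w3,w7}" for c
    using col[OF v(2) det2_anti[OF uv] grp[OF dV v(1) that]] .
  have c38: "det2 w3 w8 = 0" using col[OF u(2) CV[of w3] CW[of w8]] by simp
  have c67: "det2 w6 w7 = 0" using col[OF u(2) CW[of w6] CV[of w7]] by simp
  have c26: "det2 w2 w6 = 0" using col[OF u(2) CU[of w2] CW[of w6]] by simp
  have c84: "det2 w8 w4 = 0" using col[OF u(2) CW[of w8] CU[of w4]] by simp
  have y1a: "det2 w2 y1 = 0" using eqs c38 by simp
  have y1b: "det2 w4 y1 = 0" using eqs c67 by simp
  have Y1: "det2 u y1 = 0" using u(1) y1a y1b by auto
  have y2a: "det2 w3 y2 = 0" using eqs c26 by simp
  have y2b: "det2 w7 y2 = 0" using eqs c84 by simp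
  have vy2: "det2 v y2 = 0" using v(1) y2a y2b by auto
  have Y2: "det2 u y2 = 0" using col[OF v(2) det2_anti[OF uv] vy2] .
  show ?thesis using ub u(2) CU CV CW Y1 Y2 by (intro bexI[of _ u]) auto
qed

lemma a1: "(2*M^3)*(2*M^3)*M*M = 4*(M::nat)^8" by (simp add: eval_nat_numeral algebra_simps)
lemma a2: assumes "(M::nat) \<ge> 1" "a+b+c \<le> 8" "x \<le> M^a * M^b * M^c" shows "x \<le> 4*M^8"
proof -
  have "M^a * M^b * M^c = M^(a+b+c)" by (simp add: power_add)
  also have "\<dots> \<le> M^8" using assms by (intro power_increasing) auto
  finally show ?thesis using assms(3) by linarith
qed

lemma a412: "(M::nat) \<ge> 1 \<Longrightarrow> x \<le> M^4 * M * M^2 \<Longrightarrow> x \<le> 4*M^8"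
  using a2[of M 4 1 2 x] by simp
lemma a421: "(M::nat) \<ge> 1 \<Longrightarrow> x \<le> M^4 * M^2 * M \<Longrightarrow> x \<le> 4*M^8"
  using a2[of M 4 2 1 x] by simp
lemma a022: "(M::nat) \<ge> 1 \<Longrightarrow> x \<le> 1 * M^2 * M^2 \<Longrightarrow> x \<le> 4*M^8"
  using a2[of M 0 2 2 x] by simp

lemma QP_parts:
  assumes "QP K w2 w4 w3 w7 w8 w6 y1 y2"
  shows "w2 \<in> sqbox K" "w4 \<in> sqbox K" "w3 \<in> sqbox K" "w7 \<in> sqbox K" "w8 \<in> sqbox K" "w6 \<in> sqbox K"
    "det2 w2 w4 \<noteq> 0 \<Longrightarrow> w3 = (0,0) \<and> w7 = (0,0) \<and> w8 = (0,0) \<and> w6 = (0,0)"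
    "det2 w3 w7 \<noteq> 0 \<Longrightarrow> w2 = (0,0) \<and> w4 = (0,0) \<and> w8 = (0,0) \<and> w6 = (0,0)"
    "det2 w8 w6 \<noteq> 0 \<Longrightarrow> w2 = (0,0) \<and> w4 = (0,0) \<and> w3 = (0,0) \<and> w7 = (0,0)"
  using assms unfolding QP_def QE_def QR_def by blast+

lemma nz_iff: "nz p \<longleftrightarrow> fst p \<noteq> (0,0) \<or> snd p \<noteq> (0,0)" by (simp add: nz_def)

lemma fin_box2: "finite (sqbox K \<times> sqbox K)" by simp

lemma card_FFF: "card (Qp K False False False) \<le> 4 * (2*K+1)^8"
proof -
  have A: "card (Qp K False False False) \<le> card {(zz,zz,zz)} * (2*K+1)^2 * (2*K+1)^2"
  proof (rule card3[where Y = "\<lambda>_. sqbox K" and Z = "\<lambda>_ _. sqbox K"])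
    fix q a b assume m: "(q,a,b) \<in> Qp K False False False"
    note M = Qp_mem[OF m]
    have "q = (zz,zz,zz)" using M(2,3,4) nz_zz by (metis prod.collapse)
    then show "q \<in> {(zz,zz,zz)} \<and> a \<in> sqbox K \<and> b \<in> sqbox K" using Q_lines[OF M(5)] by blast
  qed (auto simp: card_box)
  then show ?thesis by (intro a022) simp_all
qed

lemma card_TFF: "card (Qp K True False False) \<le> 4 * (2*K+1)^8"
proof -
  let ?Os = "{q \<in> (sqbox K \<times> sqbox K) \<times> {zz} \<times> {zz}. nz (fst q)}"
  have A: "card (Qp K True False False) \<le> card ?Os * (2*K+1) * (2*K+1)^2"
  proof (rule card3[where Y = "line1 K" and Z = "\<lambda>_ _. sqbox K"])
    fix q a b assume m: "(q,a,b) \<in> Qp K True False False"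
    note M = Qp_mem[OF m]
    note P = QP_parts[OF M(1)]
    have z: "fst (snd q) = zz" "snd (snd q) = zz" using M(3,4) nz_zz by blast+
    have "q \<in> ?Os" using M(2) z P(1,2) by (auto simp: mem_Times_iff prod_eq_iff)
    then show "q \<in> ?Os \<and> a \<in> line1 K q \<and> b \<in> sqbox K" using Q_lines[OF M(5)] by blast
  next
    fix q assume "q \<in> ?Os" then show "finite (line1 K q) \<and> card (line1 K q) \<le> 2*K+1"
      using line_cards(1) by blast
  qed (auto simp: card_box intro: finite_subset[of _ "(sqbox K \<times> sqbox K) \<times> {zz} \<times> {zz}"])
  have "card ?Os \<le> card ((sqbox K \<times> sqbox K) \<times> {zz} \<times> {zz})" by (rule card_mono) auto
  also have "\<dots> = (2*K+1)^4" by (simp add: card_cartesian_product card_box power_add[symmetric])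
  finally have B: "card ?Os \<le> (2*K+1)^4" .
  have "card (Qp K True False False) \<le> (2*K+1)^4 * (2*K+1) * (2*K+1)^2"
    using A mult_le_mono1[OF mult_le_mono1[OF B]] by (rule order_trans)
  then show ?thesis by (intro a412) simp_all
qed

lemma card_FTF: "card (Qp K False True False) \<le> 4 * (2*K+1)^8"
proof -
  let ?Os = "{q \<in> {zz} \<times> (sqbox K \<times> sqbox K) \<times> {zz}. nz (fst (snd q))}"
  have A: "card (Qp K False True False) \<le> card ?Os * (2*K+1) * (2*K+1)^2"
  proof (rule card3_swap[where Y = "line2 K" and Z = "\<lambda>_ _. sqbox K"])
    fix q a b assume m: "(q,a,b) \<in> Qp K False True False"
    note M = Qp_mem[OF m]
    note P = QP_parts[OF M(1)]
    have z: "fst q = zz" "snd (snd q) = zz" using M(2,4) nz_zz by blast+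
    have "q \<in> ?Os" using M(3) z P(3,4) by (auto simp: mem_Times_iff prod_eq_iff)
    then show "q \<in> ?Os \<and> b \<in> line2 K q \<and> a \<in> sqbox K" using Q_lines[OF M(5)] by blast
  next
    fix q assume "q \<in> ?Os" then show "finite (line2 K q) \<and> card (line2 K q) \<le> 2*K+1"
      using line_cards(2) by blast
  qed (auto simp: card_box intro: finite_subset[of _ "{zz} \<times> (sqbox K \<times> sqbox K) \<times> {zz}"])
  have "card ?Os \<le> card ({zz} \<times> (sqbox K \<times> sqbox K) \<times> {zz})" by (rule card_mono) auto
  also have "\<dots> = (2*K+1)^4" by (simp add: card_cartesian_product card_box power_add[symmetric])
  finally have B: "card ?Os \<le> (2*K+1)^4" .
  have "card (Qp K False True False) \<le> (2*K+1)^4 * (2*K+1) * (2*K+1)^2"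
    using A mult_le_mono1[OF mult_le_mono1[OF B]] by (rule order_trans)
  then show ?thesis by (intro a412) simp_all
qed

lemma card_FFT: "card (Qp K False False True) \<le> 4 * (2*K+1)^8"
proof -
  let ?Os = "{q \<in> {zz} \<times> {zz} \<times> (sqbox K \<times> sqbox K). nz (snd (snd q))}"
  have A: "card (Qp K False False True) \<le> card ?Os * (2*K+1)^2 * (2*K+1)"
  proof (rule card3[where Y = "\<lambda>_. sqbox K" and Z = "line3 K"])
    fix q a b assume m: "(q,a,b) \<in> Qp K False False True"
    note M = Qp_mem[OF m]
    note P = QP_parts[OF M(1)]
    have z: "fst q = zz" "fst (snd q) = zz" using M(2,3) nz_zz by blast+
    have "q \<in> ?Os" using M(4) z P(5,6) by (auto simp: mem_Times_iff prod_eq_iff)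
    then show "q \<in> ?Os \<and> a \<in> sqbox K \<and> b \<in> line3 K q a" using Q_lines[OF M(5)] by blast
  next
    fix q a assume "q \<in> ?Os" then show "finite (line3 K q a) \<and> card (line3 K q a) \<le> 2*K+1"
      using line_cards(3) by blast
  qed (auto simp: card_box intro: finite_subset[of _ "{zz} \<times> {zz} \<times> (sqbox K \<times> sqbox K)"])
  have "card ?Os \<le> card ({zz} \<times> {zz} \<times> (sqbox K \<times> sqbox K))" by (rule card_mono) auto
  also have "\<dots> = (2*K+1)^4" by (simp add: card_cartesian_product card_box power_add[symmetric])
  finally have B: "card ?Os \<le> (2*K+1)^4" .
  have "card (Qp K False False True) \<le> (2*K+1)^4 * (2*K+1)^2 * (2*K+1)"
    using A mult_le_mono1[OF mult_le_mono1[OF B]] by (rule order_trans)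
  then show ?thesis by (intro a421) simp_all
qed

lemma card_TFT: "card (Qp K True False True) \<le> 4 * (2*K+1)^8"
proof -
  let ?Os = "{q \<in> CP K \<times> {zz} \<times> CP K. nz (fst q) \<and> nz (snd (snd q))}"
  have A: "card (Qp K True False True) \<le> card ?Os * (2*K+1) * (2*K+1)"
  proof (rule card3[where Y = "line1 K" and Z = "line3 K"])
    fix q a b assume m: "(q,a,b) \<in> Qp K True False True"
    note M = Qp_mem[OF m]
    note P = QP_parts[OF M(1)]
    have c1: "det2 (W2 q) (W4 q) = 0" using P(7) M(4) by (auto simp: nz_iff)
    have c3: "det2 (W8 q) (W6 q) = 0" using P(9) M(2) by (auto simp: nz_iff)
    have z: "fst (snd q) = zz" using M(3) nz_zz by blast+
    have "q \<in> ?Os" using M(2,4) z P(1,2,5,6) c1 c3 by (auto simp: mem_Times_iff CP_def)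
    then show "q \<in> ?Os \<and> a \<in> line1 K q \<and> b \<in> line3 K q a" using Q_lines[OF M(5)] by blast
  next
    fix q assume "q \<in> ?Os" then show "finite (line1 K q) \<and> card (line1 K q) \<le> 2*K+1"
      using line_cards(1) by blast
  next
    fix q a assume "q \<in> ?Os" then show "finite (line3 K q a) \<and> card (line3 K q a) \<le> 2*K+1"
      using line_cards(3) by blast
  qed (auto intro: finite_subset[of _ "CP K \<times> {zz} \<times> CP K"])
  have "card ?Os \<le> card (CP K \<times> {zz} \<times> CP K)" by (rule card_mono) auto
  also have "\<dots> = card (CP K) * card (CP K)" by (simp add: card_cartesian_product)
  also have "\<dots> \<le> (2*(2*K+1)^3) * (2*(2*K+1)^3)" by (intro mult_mono card_CP) auto
  finally have B: "card ?Os \<le> (2*(2*K+1)^3) * (2*(2*K+1)^3)" .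
  have "card (Qp K True False True) \<le> (2*(2*K+1)^3) * (2*(2*K+1)^3) * (2*K+1) * (2*K+1)"
    using A mult_le_mono1[OF mult_le_mono1[OF B]] by (rule order_trans)
  then show ?thesis by (simp only: a1)
qed

lemma card_FTT: "card (Qp K False True True) \<le> 4 * (2*K+1)^8"
proof -
  let ?Os = "{q \<in> {zz} \<times> CP K \<times> CP K. nz (fst (snd q)) \<and> nz (snd (snd q))}"
  have A: "card (Qp K False True True) \<le> card ?Os * (2*K+1) * (2*K+1)"
  proof (rule card3_swap[where Y = "line2 K" and Z = "line4 K"])
    fix q a b assume m: "(q,a,b) \<in> Qp K False True True"
    note M = Qp_mem[OF m]
    note P = QP_parts[OF M(1)]
    have c2: "det2 (W3 q) (W7 q) = 0" using P(8) M(4) by (auto simp: nz_iff)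
    have c3: "det2 (W8 q) (W6 q) = 0" using P(9) M(3) by (auto simp: nz_iff)
    have z: "fst q = zz" using M(2) nz_zz by blast+
    have "q \<in> ?Os" using M(3,4) z P(3,4,5,6) c2 c3 by (auto simp: mem_Times_iff CP_def)
    then show "q \<in> ?Os \<and> b \<in> line2 K q \<and> a \<in> line4 K q b" using Q_lines[OF M(5)] by blast
  next
    fix q assume "q \<in> ?Os" then show "finite (line2 K q) \<and> card (line2 K q) \<le> 2*K+1"
      using line_cards(2) by blast
  next
    fix q b assume "q \<in> ?Os" then show "finite (line4 K q b) \<and> card (line4 K q b) \<le> 2*K+1"
      using line_cards(4) by blast
  qed (auto intro: finite_subset[of _ "{zz} \<times> CP K \<times> CP K"])
  have "card ?Os \<le> card ({zz} \<times> CP K \<times> CP K)" by (rule card_mono) auto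
  also have "\<dots> = card (CP K) * card (CP K)" by (simp add: card_cartesian_product)
  also have "\<dots> \<le> (2*(2*K+1)^3) * (2*(2*K+1)^3)" by (intro mult_mono card_CP) auto
  finally have B: "card ?Os \<le> (2*(2*K+1)^3) * (2*(2*K+1)^3)" .
  have "card (Qp K False True True) \<le> (2*(2*K+1)^3) * (2*(2*K+1)^3) * (2*K+1) * (2*K+1)"
    using A mult_le_mono1[OF mult_le_mono1[OF B]] by (rule order_trans)
  then show ?thesis by (simp only: a1)
qed

lemma card_TTF': "card (Qp K True True False) \<le> 4 * (2*K+1)^8"
  using card_TTF[of K] by (simp only: a1)

lemma card_TTT: "real (card (Qp K True True True)) \<le> 3^8 * 25 * real K ^ 8"
proof (rule common_card)
  fix x assume x: "x \<in> Qp K True True True"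
  obtain q a b where xq: "x = (q,a,b)" by (metis prod.collapse)
  note M = Qp_mem[OF x[unfolded xq]]
  note P = QP_parts[OF M(1)]
  have ab: "a \<in> sqbox K" "b \<in> sqbox K" using Q_lines[OF M(5)] by auto
  have "\<exists>u\<in>sqbox K. u \<noteq> (0,0) \<and> (\<forall>c\<in>set [W2 q, W4 q, W3 q, W7 q, W8 q, W6 q, a, b]. det2 u c = 0)"
    by (rule common_col[OF M(1)]) (use M(2,3,4) in \<open>auto simp: nz_iff\<close>)
  then show "set (vecs8 x) \<subseteq> sqbox K \<and> (\<exists>u\<in>sqbox K. u \<noteq> (0,0) \<and> (\<forall>c\<in>set (vecs8 x). det2 u c = 0))"
    using P(1-6) ab by (simp add: xq vecs8_def)
qed

lemma Q_split: "Q K \<subseteq> Qp K False False False \<union> Qp K True False False \<union> Qp K False True False \<union>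
   Qp K False False True \<union> Qp K True True False \<union> Qp K True False True \<union> Qp K False True True \<union> Qp K True True True"
  by (auto simp: Qp_def)

lemma finite_Q: "finite (Q K)"
proof -
  have "Q K \<subseteq> ((sqbox K \<times> sqbox K) \<times> (sqbox K \<times> sqbox K) \<times> (sqbox K \<times> sqbox K)) \<times> sqbox K \<times> sqbox K"
    by (auto simp: Q_def QP_def QE_def mem_Times_iff)
  then show ?thesis by (rule finite_subset) simp
qed

lemma card_Q: "real (card (Q K)) \<le> 200000 * (2 * real K + 1)^8"
proof -
  have fin: "finite (Qp K a b c)" for a b c
    using finite_Q by (rule finite_subset[rotated]) (auto simp: Qp_def)
  have "card (Q K) \<le> card (Qp K False False False \<union> Qp K True False False \<union> Qp K False True False \<union>
   Qp K False False True \<union> Qp K True True False \<union> Qp K True False True \<union> Qp K False True True \<union> Qp K True True True)"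
    by (rule card_mono[OF _ Q_split]) (simp add: fin)
  also have "\<dots> \<le> card (Qp K False False False) + card (Qp K True False False) + card (Qp K False True False) +
   card (Qp K False False True) + card (Qp K True True False) + card (Qp K True False True) + card (Qp K False True True) + card (Qp K True True True)"
    by (intro order_trans[OF card_Un_le] add_mono order_refl) 
  finally have c: "card (Q K) \<le> 7 * (4 * (2*K+1)^8) + card (Qp K True True True)"
    using card_FFF[of K] card_TFF[of K] card_FTF[of K] card_FFT[of K] card_TTF'[of K] card_TFT[of K] card_FTT[of K]
    by linarith
  have "real (card (Q K)) \<le> 7 * (4 * (2 * real K + 1)^8) + real (card (Qp K True True True))"
  proof -
    have "real (card (Q K)) \<le> real (7 * (4 * (2*K+1)^8) + card (Qp K True True True))"
      using c by (rule of_nat_mono)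
    then show ?thesis by (simp add: add.commute)
  qed
  also have "\<dots> \<le> 7 * (4 * (2 * real K + 1)^8) + 3^8 * 25 * (2 * real K + 1) ^ 8"
  proof -
    have p: "real K ^ 8 \<le> (2 * real K + 1)^8" by (intro power_mono) auto
    have t: "real (card (Qp K True True True)) \<le> 3^8 * 25 * real K ^ 8" by (rule card_TTT)
    have p2: "3^8 * 25 * real K ^ 8 \<le> 3^8 * 25 * (2 * real K + 1)^8" by (rule mult_left_mono[OF p]) simp
    show ?thesis using p2 t by linarith
  qed
  also have "\<dots> \<le> 200000 * (2 * real K + 1)^8" by simp
  finally show ?thesis .
qed

lemma row_in_rows: "M $ i \<in> rows M"
proof -
  have "row i M = M $ i" by (simp add: row_def vec_eq_iff)
  then show ?thesis unfolding rows_def by (intro CollectI exI[of _ i]) simp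
qed

lemma rank_dep:
  fixes M :: "real^'n^'m"
  assumes "rank M \<le> 2"
  shows "\<exists>\<alpha> \<beta> \<gamma>. (\<alpha> \<noteq> 0 \<or> \<beta> \<noteq> 0 \<or> \<gamma> \<noteq> 0) \<and> \<alpha> *\<^sub>R M$i + \<beta> *\<^sub>R M$j + \<gamma> *\<^sub>R M$k = 0"
    (is "\<exists>\<alpha> \<beta> \<gamma>. ?P \<alpha> \<beta> \<gamma>")
proof (rule ccontr)
  assume H: "\<not> (\<exists>\<alpha> \<beta> \<gamma>. ?P \<alpha> \<beta> \<gamma>)"
  have H': "\<not> ?P a b c" for a b c using H by blast
  let ?x = "M$i" and ?y = "M$j" and ?z = "M$k"
  have xy: "?x \<noteq> ?y"
  proof
    assume e: "?x = ?y"
    have "1 *\<^sub>R ?x + (-1) *\<^sub>R ?y + 0 *\<^sub>R ?z = 0" unfolding e by simp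
    then have "?P 1 (-1) 0" by simp
    then show False using H' by blast
  qed
  have xz: "?x \<noteq> ?z"
  proof
    assume e: "?x = ?z"
    have "1 *\<^sub>R ?x + 0 *\<^sub>R ?y + (-1) *\<^sub>R ?z = 0" unfolding e by simp
    then have "?P 1 0 (-1)" by simp
    then show False using H' by blast
  qed
  have yz: "?y \<noteq> ?z"
  proof
    assume e: "?y = ?z"
    have "0 *\<^sub>R ?x + 1 *\<^sub>R ?y + (-1) *\<^sub>R ?z = 0" unfolding e by simp
    then have "?P 0 1 (-1)" by simp
    then show False using H' by blast
  qed
  have ind: "independent {?x, ?y, ?z}"
  proof (rule independent_if_scalars_zero)
    fix f :: "real^'n \<Rightarrow> real" and w
    assume s: "(\<Sum>v\<in>{?x, ?y, ?z}. f v *\<^sub>R v) = 0" and w: "w \<in> {?x, ?y, ?z}"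
    have "(\<Sum>v\<in>{?x, ?y, ?z}. f v *\<^sub>R v) = f ?x *\<^sub>R ?x + (f ?y *\<^sub>R ?y + f ?z *\<^sub>R ?z)"
      using xy xz yz by simp
    then have eq: "f ?x *\<^sub>R ?x + f ?y *\<^sub>R ?y + f ?z *\<^sub>R ?z = 0"
      using s by (simp add: add.assoc)
    have "\<not> (f ?x \<noteq> 0 \<or> f ?y \<noteq> 0 \<or> f ?z \<noteq> 0)"
    proof
      assume "f ?x \<noteq> 0 \<or> f ?y \<noteq> 0 \<or> f ?z \<noteq> 0"
      then have "?P (f ?x) (f ?y) (f ?z)" using eq by blast
      then show False using H' by blast
    qed
    then show "f w = 0" using w by blast
  qed simp
  have "card {?x, ?y, ?z} \<le> dim (rows M)"
    by (rule independent_card_le_dim[OF _ ind]) (simp add: row_in_rows)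
  also have "\<dots> = rank M" by (simp add: row_rank_def)
  finally have "3 \<le> rank M" using xy xz yz by simp
  then show False using assms by simp
qed

definition Mlist :: "int^3^3 \<Rightarrow> int^3^3 \<Rightarrow> real list list" where
  "Mlist A B = (let a = (\<lambda>k. real_of_int (ent A k)); b = (\<lambda>k. real_of_int (ent B k)) in
            [[- b 2, a 2, 0, 0],
             [b 4, - a 4, 0, 0],
             [0, 0, - b 3, a 3],
             [0, 0, b 7, - a 7],
             [b 8, - a 8, - b 8, a 8],
             [- b 6, a 6, b 6, - a 6]])"

lemma Mmat_ent:
  assumes "i < 6" "l < 4"
  shows "Mmat A B $ Abs_bit0 (int i) $ Abs_bit0 (int l) = Mlist A B ! i ! l"
  using assms by (simp add: Mmat_def Mlist_def Let_def Abs_bit0_inverse)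

lemma dep_rows:
  assumes "rank (Mmat A B) \<le> 2" "i < 6" "j < 6" "k < 6"
  shows "\<exists>\<alpha> \<beta> \<gamma>. (\<alpha> \<noteq> 0 \<or> \<beta> \<noteq> 0 \<or> \<gamma> \<noteq> 0) \<and>
     (\<forall>l<4. \<alpha> * Mlist A B ! i ! l + \<beta> * Mlist A B ! j ! l + \<gamma> * Mlist A B ! k ! l = 0)"
proof -
  obtain \<alpha> \<beta> \<gamma> where nt: "\<alpha> \<noteq> 0 \<or> \<beta> \<noteq> 0 \<or> \<gamma> \<noteq> 0"
    and e: "\<alpha> *\<^sub>R Mmat A B $ Abs_bit0 (int i) + \<beta> *\<^sub>R Mmat A B $ Abs_bit0 (int j) + \<gamma> *\<^sub>R Mmat A B $ Abs_bit0 (int k) = 0"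
    using rank_dep[OF assms(1)] by blast
  have "\<forall>l<4. \<alpha> * Mlist A B ! i ! l + \<beta> * Mlist A B ! j ! l + \<gamma> * Mlist A B ! k ! l = 0"
  proof (intro allI impI)
    fix l :: nat assume l: "l < 4"
    have "(\<alpha> *\<^sub>R Mmat A B $ Abs_bit0 (int i) + \<beta> *\<^sub>R Mmat A B $ Abs_bit0 (int j) + \<gamma> *\<^sub>R Mmat A B $ Abs_bit0 (int k)) $ (Abs_bit0 (int l) :: 4) = 0"
      using e by simp
    then show "\<alpha> * Mlist A B ! i ! l + \<beta> * Mlist A B ! j ! l + \<gamma> * Mlist A B ! k ! l = 0"
      using Mmat_ent[OF assms(2) l] Mmat_ent[OF assms(3) l] Mmat_ent[OF assms(4) l] by simp
  qed
  then show ?thesis using nt by blast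
qed

lemma core2:
  fixes a b P1 P2 Q1 Q2 :: real
  assumes "a*P1 + b*Q1 = 0" "a*P2 + b*Q2 = 0" "P1*Q2 - P2*Q1 \<noteq> 0"
  shows "a = 0 \<and> b = 0"
proof -
  have "a*(P1*Q2 - P2*Q1) = Q2*(a*P1) - Q1*(a*P2)" by (simp add: algebra_simps)
  also have "a*P1 = -(b*Q1)" using assms(1) by linarith
  also have "a*P2 = -(b*Q2)" using assms(2) by linarith
  finally have "a*(P1*Q2 - P2*Q1) = 0" by (simp add: algebra_simps)
  then have a0: "a = 0" using assms(3) by simp
  have "b*(P1*Q2 - P2*Q1) = P1*(b*Q2) - P2*(b*Q1)" by (simp add: algebra_simps)
  also have "b*Q2 = -(a*P2)" using assms(2) by linarith
  also have "b*Q1 = -(a*P1)" using assms(1) by linarith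
  finally have "b*(P1*Q2 - P2*Q1) = 0" by (simp add: algebra_simps)
  then have "b = 0" using assms(3) by simp
  with a0 show ?thesis by simp
qed

lemma core3:
  fixes a c P1 P2 S1 S2 :: real
  assumes "a*P1 + c*S1 = 0" "a*P2 + c*S2 = 0" "c \<noteq> 0"
  shows "P1*S2 - P2*S1 = 0"
proof -
  have "c*(P1*S2 - P2*S1) = P1*(c*S2) - P2*(c*S1)" by (simp add: algebra_simps)
  also have "c*S2 = -(a*P2)" using assms(2) by linarith
  also have "c*S1 = -(a*P1)" using assms(1) by linarith
  finally have "c*(P1*S2 - P2*S1) = 0" by (simp add: algebra_simps)
  then show ?thesis using assms(3) by simp
qed

lemma det_real: "(e1 * - real_of_int (snd u)) * (e2 * real_of_int (fst v)) - (e1 * real_of_int (fst u)) * (e2 * - real_of_int (snd v))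
   = e1 * e2 * real_of_int (det2 u v)"
  by (simp add: det2_def algebra_simps)

lemma nz_real: "u \<noteq> (0,0) \<Longrightarrow> e \<noteq> 0 \<Longrightarrow> a * (e * - real_of_int (snd u)) = 0 \<Longrightarrow> a * (e * real_of_int (fst u)) = 0 \<Longrightarrow> (a::real) = 0"
  by (cases u) auto

lemma F1_gen:
  assumes r: "rank (Mmat A B) \<le> 2" "i < 6" "j < 6" "k < 6"
    and ri: "Mlist A B ! i = [e1 * - real_of_int (snd u), e1 * real_of_int (fst u), 0, 0]"
    and rj: "Mlist A B ! j = [e2 * - real_of_int (snd v), e2 * real_of_int (fst v), 0, 0]"
    and rk: "Mlist A B ! k = [s1, s2, e3 * - real_of_int (snd x), e3 * real_of_int (fst x)]"
    and e: "e1 \<noteq> 0" "e2 \<noteq> 0" "e3 \<noteq> 0" and d: "det2 u v \<noteq> 0"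
  shows "x = (0,0)"
proof -
  obtain a b c where nt: "a \<noteq> 0 \<or> b \<noteq> 0 \<or> c \<noteq> 0"
    and L: "\<forall>l<4. a * Mlist A B ! i ! l + b * Mlist A B ! j ! l + c * Mlist A B ! k ! l = 0"
    using dep_rows[OF r] by blast
  have l0: "a * (e1 * - real_of_int (snd u)) + b * (e2 * - real_of_int (snd v)) + c * s1 = 0"
    using L[rule_format, of 0] ri rj rk by simp
  have l1: "a * (e1 * real_of_int (fst u)) + b * (e2 * real_of_int (fst v)) + c * s2 = 0"
    using L[rule_format, of 1] ri rj rk by simp
  have l2: "c * (e3 * - real_of_int (snd x)) = 0"
    using L[rule_format, of 2] ri rj rk by simp
  have l3: "c * (e3 * real_of_int (fst x)) = 0"
    using L[rule_format, of 3] ri rj rk by simp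
  have c0: "c \<noteq> 0"
  proof
    assume c: "c = 0"
    have "a = 0 \<and> b = 0"
    proof (rule core2)
      show "a * (e1 * - real_of_int (snd u)) + b * (e2 * - real_of_int (snd v)) = 0" using l0 c by simp
      show "a * (e1 * real_of_int (fst u)) + b * (e2 * real_of_int (fst v)) = 0" using l1 c by simp
      show "(e1 * - real_of_int (snd u)) * (e2 * real_of_int (fst v)) - (e1 * real_of_int (fst u)) * (e2 * - real_of_int (snd v)) \<noteq> 0"
        unfolding det_real using e d by simp
    qed
    then show False using nt c by simp
  qed
  then show ?thesis using l2 l3 e(3) by (cases x) auto
qed

lemma F2_gen:
  assumes r: "rank (Mmat A B) \<le> 2" "i < 6" "j < 6" "k < 6"
    and ri: "Mlist A B ! i = [0, 0, e1 * - real_of_int (snd u), e1 * real_of_int (fst u)]"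
    and rj: "Mlist A B ! j = [0, 0, e2 * - real_of_int (snd v), e2 * real_of_int (fst v)]"
    and rk: "Mlist A B ! k = [e3 * - real_of_int (snd x), e3 * real_of_int (fst x), s3, s4]"
    and e: "e1 \<noteq> 0" "e2 \<noteq> 0" "e3 \<noteq> 0" and d: "det2 u v \<noteq> 0"
  shows "x = (0,0)"
proof -
  obtain a b c where nt: "a \<noteq> 0 \<or> b \<noteq> 0 \<or> c \<noteq> 0"
    and L: "\<forall>l<4. a * Mlist A B ! i ! l + b * Mlist A B ! j ! l + c * Mlist A B ! k ! l = 0"
    using dep_rows[OF r] by blast
  have l0: "a * (e1 * - real_of_int (snd u)) + b * (e2 * - real_of_int (snd v)) + c * s3 = 0"
    using L[rule_format, of 2] ri rj rk by simp
  have l1: "a * (e1 * real_of_int (fst u)) + b * (e2 * real_of_int (fst v)) + c * s4 = 0"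
    using L[rule_format, of 3] ri rj rk by simp
  have l2: "c * (e3 * - real_of_int (snd x)) = 0"
    using L[rule_format, of 0] ri rj rk by simp
  have l3: "c * (e3 * real_of_int (fst x)) = 0"
    using L[rule_format, of 1] ri rj rk by simp
  have c0: "c \<noteq> 0"
  proof
    assume c: "c = 0"
    have "a = 0 \<and> b = 0"
    proof (rule core2)
      show "a * (e1 * - real_of_int (snd u)) + b * (e2 * - real_of_int (snd v)) = 0" using l0 c by simp
      show "a * (e1 * real_of_int (fst u)) + b * (e2 * real_of_int (fst v)) = 0" using l1 c by simp
      show "(e1 * - real_of_int (snd u)) * (e2 * real_of_int (fst v)) - (e1 * real_of_int (fst u)) * (e2 * - real_of_int (snd v)) \<noteq> 0"
        unfolding det_real using e d by simp
    qed
    then show False using nt c by simp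
  qed
  then show ?thesis using l2 l3 e(3) by (cases x) auto
qed

lemma F3_gen:
  assumes r: "rank (Mmat A B) \<le> 2" "i < 6" "j < 6" "k < 6"
    and ri: "Mlist A B ! i = [e1 * - real_of_int (snd u), e1 * real_of_int (fst u), - (e1 * - real_of_int (snd u)), - (e1 * real_of_int (fst u))]"
    and rj: "Mlist A B ! j = [e2 * - real_of_int (snd v), e2 * real_of_int (fst v), - (e2 * - real_of_int (snd v)), - (e2 * real_of_int (fst v))]"
    and rk: "Mlist A B ! k = [e3 * - real_of_int (snd x), e3 * real_of_int (fst x), 0, 0] \<or>
             Mlist A B ! k = [0, 0, e3 * - real_of_int (snd x), e3 * real_of_int (fst x)]"
    and e: "e1 \<noteq> 0" "e2 \<noteq> 0" "e3 \<noteq> 0" and d: "det2 u v \<noteq> 0"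
  shows "x = (0,0)"
proof -
  obtain a b c where nt: "a \<noteq> 0 \<or> b \<noteq> 0 \<or> c \<noteq> 0"
    and L: "\<forall>l<4. a * Mlist A B ! i ! l + b * Mlist A B ! j ! l + c * Mlist A B ! k ! l = 0"
    using dep_rows[OF r] by blast
  have L0: "a * Mlist A B ! i ! l + b * Mlist A B ! j ! l + c * Mlist A B ! k ! l = 0" if "l < 4" for l
    using L that by blast
  show ?thesis
  using rk proof
    assume rk: "Mlist A B ! k = [e3 * - real_of_int (snd x), e3 * real_of_int (fst x), 0, 0]"
    have l0: "a * (e1 * - real_of_int (snd u)) + b * (e2 * - real_of_int (snd v)) = 0"
      using L0[of 2] ri rj rk by simp
    have l1: "a * (e1 * real_of_int (fst u)) + b * (e2 * real_of_int (fst v)) = 0"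
      using L0[of 3] ri rj rk by simp
    have ab: "a = 0 \<and> b = 0"
      by (rule core2[OF l0 l1]) (unfold det_real, use e d in simp)
    have l2: "c * (e3 * - real_of_int (snd x)) = 0"
      using L0[of 0] ri rj rk ab by simp
    have l3: "c * (e3 * real_of_int (fst x)) = 0"
      using L0[of 1] ri rj rk ab by simp
    have "c \<noteq> 0" using nt ab by simp
    then show ?thesis using l2 l3 e(3) by (cases x) auto
  next
    assume rk: "Mlist A B ! k = [0, 0, e3 * - real_of_int (snd x), e3 * real_of_int (fst x)]"
    have l0: "a * (e1 * - real_of_int (snd u)) + b * (e2 * - real_of_int (snd v)) = 0"
      using L0[of 0] ri rj rk by simp
    have l1: "a * (e1 * real_of_int (fst u)) + b * (e2 * real_of_int (fst v)) = 0"
      using L0[of 1] ri rj rk by simp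
    have ab: "a = 0 \<and> b = 0"
      by (rule core2[OF l0 l1]) (unfold det_real, use e d in simp)
    have l2: "c * (e3 * - real_of_int (snd x)) = 0"
      using L0[of 2] ri rj rk ab by simp
    have l3: "c * (e3 * real_of_int (fst x)) = 0"
      using L0[of 3] ri rj rk ab by simp
    have "c \<noteq> 0" using nt ab by simp
    then show ?thesis using l2 l3 e(3) by (cases x) auto
  qed
qed

lemma F4_gen:
  assumes r: "rank (Mmat A B) \<le> 2" "i < 6" "j < 6" "k < 6"
    and ri: "Mlist A B ! i = [e1 * - real_of_int (snd u), e1 * real_of_int (fst u), 0, 0]"
    and rj: "Mlist A B ! j = [0, 0, e2 * - real_of_int (snd v), e2 * real_of_int (fst v)]"
    and rk: "Mlist A B ! k = [e3 * - real_of_int (snd w), e3 * real_of_int (fst w), - (e3 * - real_of_int (snd w)), - (e3 * real_of_int (fst w))]"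
    and e: "e1 \<noteq> 0" "e2 \<noteq> 0" "e3 \<noteq> 0" and nz: "u \<noteq> (0,0)" "v \<noteq> (0,0)"
  shows "det2 u w = 0 \<and> det2 v w = 0"
proof -
  obtain a b c where nt: "a \<noteq> 0 \<or> b \<noteq> 0 \<or> c \<noteq> 0"
    and L: "\<forall>l<4. a * Mlist A B ! i ! l + b * Mlist A B ! j ! l + c * Mlist A B ! k ! l = 0"
    using dep_rows[OF r] by blast
  have L0: "a * Mlist A B ! i ! l + b * Mlist A B ! j ! l + c * Mlist A B ! k ! l = 0" if "l < 4" for l
    using L that by blast
  have l0: "a * (e1 * - real_of_int (snd u)) + c * (e3 * - real_of_int (snd w)) = 0"
    using L0[of 0] ri rj rk by simp
  have l1: "a * (e1 * real_of_int (fst u)) + c * (e3 * real_of_int (fst w)) = 0"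
    using L0[of 1] ri rj rk by simp
  have l2: "b * (e2 * - real_of_int (snd v)) + (-c) * (e3 * - real_of_int (snd w)) = 0"
    using L0[of 2] ri rj rk by simp
  have l3: "b * (e2 * real_of_int (fst v)) + (-c) * (e3 * real_of_int (fst w)) = 0"
    using L0[of 3] ri rj rk by simp
  have c0: "c \<noteq> 0"
  proof
    assume c: "c = 0"
    have "a * (e1 * - real_of_int (snd u)) = 0" "a * (e1 * real_of_int (fst u)) = 0" using l0 l1 c by simp_all
    then have "a = 0" by (rule nz_real[OF nz(1) e(1)])
    moreover have "b * (e2 * - real_of_int (snd v)) = 0" "b * (e2 * real_of_int (fst v)) = 0" using l2 l3 c by simp_all
    then have "b = 0" by (rule nz_real[OF nz(2) e(2)])
    ultimately show False using nt c by simp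
  qed
  have "(e1 * - real_of_int (snd u)) * (e3 * real_of_int (fst w)) - (e1 * real_of_int (fst u)) * (e3 * - real_of_int (snd w)) = 0"
    by (rule core3[OF l0 l1 c0])
  then have d1: "det2 u w = 0" unfolding det_real using e by simp
  have "(e2 * - real_of_int (snd v)) * (e3 * real_of_int (fst w)) - (e2 * real_of_int (fst v)) * (e3 * - real_of_int (snd w)) = 0"
    by (rule core3[OF l2 l3]) (use c0 in simp)
  then have d2: "det2 v w = 0" unfolding det_real using e by simp
  show ?thesis using d1 d2 by simp
qed

lemma ent_simps:
  "ent A (Suc 0) = A$1$1" "ent A 2 = A$1$2" "ent A 3 = A$1$3"
  "ent A 4 = A$2$1" "ent A 5 = A$2$2" "ent A 6 = A$2$3"
  "ent A 7 = A$3$1" "ent A 8 = A$3$2" "ent A 9 = A$3$3"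
  by (simp_all add: ent_def)

lemma comm_eqs:
  fixes A B :: "int^3^3"
  assumes "A ** B = B ** A"
  shows "ent A 1 * ent B 2 + ent A 2 * ent B 5 + ent A 3 * ent B 8 = ent B 1 * ent A 2 + ent B 2 * ent A 5 + ent B 3 * ent A 8"
    "ent A 4 * ent B 1 + ent A 5 * ent B 4 + ent A 6 * ent B 7 = ent B 4 * ent A 1 + ent B 5 * ent A 4 + ent B 6 * ent A 7"
    "ent A 1 * ent B 3 + ent A 2 * ent B 6 + ent A 3 * ent B 9 = ent B 1 * ent A 3 + ent B 2 * ent A 6 + ent B 3 * ent A 9"
    "ent A 7 * ent B 1 + ent A 8 * ent B 4 + ent A 9 * ent B 7 = ent B 7 * ent A 1 + ent B 8 * ent A 4 + ent B 9 * ent A 7"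
    "ent A 4 * ent B 3 + ent A 5 * ent B 6 + ent A 6 * ent B 9 = ent B 4 * ent A 3 + ent B 5 * ent A 6 + ent B 6 * ent A 9"
    "ent A 7 * ent B 2 + ent A 8 * ent B 5 + ent A 9 * ent B 8 = ent B 7 * ent A 2 + ent B 8 * ent A 5 + ent B 9 * ent A 8"
proof -
  have e: "(A ** B) $ i $ j = (B ** A) $ i $ j" for i j using assms by simp
  show "ent A 1 * ent B 2 + ent A 2 * ent B 5 + ent A 3 * ent B 8 = ent B 1 * ent A 2 + ent B 2 * ent A 5 + ent B 3 * ent A 8"
    using e[of 1 2] by (simp add: matrix_matrix_mult_def sum_3 ent_simps)
  show "ent A 4 * ent B 1 + ent A 5 * ent B 4 + ent A 6 * ent B 7 = ent B 4 * ent A 1 + ent B 5 * ent A 4 + ent B 6 * ent A 7"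
    using e[of 2 1] by (simp add: matrix_matrix_mult_def sum_3 ent_simps)
  show "ent A 1 * ent B 3 + ent A 2 * ent B 6 + ent A 3 * ent B 9 = ent B 1 * ent A 3 + ent B 2 * ent A 6 + ent B 3 * ent A 9"
    using e[of 1 3] by (simp add: matrix_matrix_mult_def sum_3 ent_simps)
  show "ent A 7 * ent B 1 + ent A 8 * ent B 4 + ent A 9 * ent B 7 = ent B 7 * ent A 1 + ent B 8 * ent A 4 + ent B 9 * ent A 7"
    using e[of 3 1] by (simp add: matrix_matrix_mult_def sum_3 ent_simps)
  show "ent A 4 * ent B 3 + ent A 5 * ent B 6 + ent A 6 * ent B 9 = ent B 4 * ent A 3 + ent B 5 * ent A 6 + ent B 6 * ent A 9"
    using e[of 2 3] by (simp add: matrix_matrix_mult_def sum_3 ent_simps)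
  show "ent A 7 * ent B 2 + ent A 8 * ent B 5 + ent A 9 * ent B 8 = ent B 7 * ent A 2 + ent B 8 * ent A 5 + ent B 9 * ent A 8"
    using e[of 3 2] by (simp add: matrix_matrix_mult_def sum_3 ent_simps)
qed

definition wv :: "int^3^3 \<Rightarrow> int^3^3 \<Rightarrow> nat \<Rightarrow> v2" where "wv A B k = (ent A k, ent B k)"

lemma QE_eqs:
  fixes A B :: "int^3^3"
  assumes "A ** B = B ** A"
  defines "w \<equiv> wv A B"
  defines "y1 \<equiv> sub2 (w 5) (w 1)" and "y2 \<equiv> sub2 (w 9) (w 1)"
  shows "det2 (w 2) y1 + det2 (w 3) (w 8) = 0 \<and> det2 (w 4) y1 = det2 (w 6) (w 7) \<and>
    det2 (w 3) y2 + det2 (w 2) (w 6) = 0 \<and> det2 (w 7) y2 = det2 (w 8) (w 4) \<and>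
    det2 (w 6) (sub2 y1 y2) = det2 (w 4) (w 3) \<and> det2 (w 8) (sub2 y1 y2) + det2 (w 7) (w 2) = 0"
  using comm_eqs[OF assms(1)] unfolding w_def y1_def y2_def wv_def det2_def sub2_def
  by (simp add: algebra_simps)

lemma Mrows:
  fixes A B :: "int^3^3"
  defines "w \<equiv> wv A B"
  shows
  "Mlist A B ! 0 = [1 * - real_of_int (snd (w 2)), 1 * real_of_int (fst (w 2)), 0, 0]"
  "Mlist A B ! 1 = [(-1) * - real_of_int (snd (w 4)), (-1) * real_of_int (fst (w 4)), 0, 0]"
  "Mlist A B ! 2 = [0, 0, 1 * - real_of_int (snd (w 3)), 1 * real_of_int (fst (w 3))]"
  "Mlist A B ! 3 = [0, 0, (-1) * - real_of_int (snd (w 7)), (-1) * real_of_int (fst (w 7))]"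
  "Mlist A B ! 4 = [(-1) * - real_of_int (snd (w 8)), (-1) * real_of_int (fst (w 8)), 1 * - real_of_int (snd (w 8)), 1 * real_of_int (fst (w 8))]"
  "Mlist A B ! 5 = [1 * - real_of_int (snd (w 6)), 1 * real_of_int (fst (w 6)), (-1) * - real_of_int (snd (w 6)), (-1) * real_of_int (fst (w 6))]"
  "Mlist A B ! 4 = [(-1) * - real_of_int (snd (w 8)), (-1) * real_of_int (fst (w 8)), - ((-1) * - real_of_int (snd (w 8))), - ((-1) * real_of_int (fst (w 8)))]"
  "Mlist A B ! 5 = [1 * - real_of_int (snd (w 6)), 1 * real_of_int (fst (w 6)), - (1 * - real_of_int (snd (w 6))), - (1 * real_of_int (fst (w 6)))]"
  by (simp_all add: Mlist_def Let_def w_def wv_def)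

lemma rank_QR:
  fixes A B :: "int^3^3"
  assumes r: "rank (Mmat A B) \<le> 2"
  defines "w \<equiv> wv A B"
  shows "QR (w 2) (w 4) (w 3) (w 7) (w 8) (w 6)"
proof -
  note R = Mrows[of A B, folded w_def]
  have G1: "det2 (w 2) (w 4) \<noteq> 0 \<longrightarrow> w 3 = (0,0) \<and> w 7 = (0,0) \<and> w 8 = (0,0) \<and> w 6 = (0,0)"
  proof
    assume d: "det2 (w 2) (w 4) \<noteq> 0"
    show "w 3 = (0,0) \<and> w 7 = (0,0) \<and> w 8 = (0,0) \<and> w 6 = (0,0)"
      using F1_gen[OF r _ _ _ R(1) R(2) R(3) _ _ _ d] F1_gen[OF r _ _ _ R(1) R(2) R(4) _ _ _ d]
        F1_gen[OF r _ _ _ R(1) R(2) R(5) _ _ _ d] F1_gen[OF r _ _ _ R(1) R(2) R(6) _ _ _ d]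
      by simp
  qed
  have G2: "det2 (w 3) (w 7) \<noteq> 0 \<longrightarrow> w 2 = (0,0) \<and> w 4 = (0,0) \<and> w 8 = (0,0) \<and> w 6 = (0,0)"
  proof
    assume d: "det2 (w 3) (w 7) \<noteq> 0"
    show "w 2 = (0,0) \<and> w 4 = (0,0) \<and> w 8 = (0,0) \<and> w 6 = (0,0)"
      using F2_gen[OF r _ _ _ R(3) R(4) R(1) _ _ _ d] F2_gen[OF r _ _ _ R(3) R(4) R(2) _ _ _ d]
        F2_gen[OF r _ _ _ R(3) R(4) R(5) _ _ _ d] F2_gen[OF r _ _ _ R(3) R(4) R(6) _ _ _ d]
      by simp
  qed
  have G3: "det2 (w 8) (w 6) \<noteq> 0 \<longrightarrow> w 2 = (0,0) \<and> w 4 = (0,0) \<and> w 3 = (0,0) \<and> w 7 = (0,0)"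
  proof
    assume d: "det2 (w 8) (w 6) \<noteq> 0"
    show "w 2 = (0,0) \<and> w 4 = (0,0) \<and> w 3 = (0,0) \<and> w 7 = (0,0)"
      using F3_gen[OF r _ _ _ R(7) R(8) disjI1[OF R(1)] _ _ _ d] F3_gen[OF r _ _ _ R(7) R(8) disjI1[OF R(2)] _ _ _ d]
        F3_gen[OF r _ _ _ R(7) R(8) disjI2[OF R(3)] _ _ _ d] F3_gen[OF r _ _ _ R(7) R(8) disjI2[OF R(4)] _ _ _ d]
      by simp
  qed
  have G4: "\<forall>u\<in>{w 2, w 4}. \<forall>v\<in>{w 3, w 7}. \<forall>x\<in>{w 8, w 6}. u \<noteq> (0,0) \<longrightarrow> v \<noteq> (0,0) \<longrightarrow> x \<noteq> (0,0) \<longrightarrow>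
       det2 u x = 0 \<and> det2 v x = 0"
  proof (intro ballI impI)
    fix u v x assume u: "u \<in> {w 2, w 4}" and v: "v \<in> {w 3, w 7}" and x: "x \<in> {w 8, w 6}"
      and nu: "u \<noteq> (0,0)" and nv: "v \<noteq> (0,0)" and "x \<noteq> (0,0)"
    have ri: "\<exists>i e. i < 6 \<and> e \<noteq> 0 \<and> Mlist A B ! i = [e * - real_of_int (snd u), e * real_of_int (fst u), 0, 0]"
    proof -
      have "u = w 2 \<or> u = w 4" using u by blast
      then show ?thesis
      proof
        assume e: "u = w 2"
        show ?thesis unfolding e by (rule exI[of _ 0], rule exI[of _ "1"]) (use R(1) in simp)
      next
        assume e: "u = w 4"
        show ?thesis unfolding e by (rule exI[of _ 1], rule exI[of _ "-1"]) (use R(2) in simp)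
      qed
    qed
    have rj: "\<exists>i e. i < 6 \<and> e \<noteq> 0 \<and> Mlist A B ! i = [0, 0, e * - real_of_int (snd v), e * real_of_int (fst v)]"
    proof -
      have "v = w 3 \<or> v = w 7" using v by blast
      then show ?thesis
      proof
        assume e: "v = w 3"
        show ?thesis unfolding e by (rule exI[of _ 2], rule exI[of _ "1"]) (use R(3) in simp)
      next
        assume e: "v = w 7"
        show ?thesis unfolding e by (rule exI[of _ 3], rule exI[of _ "-1"]) (use R(4) in simp)
      qed
    qed
    have rk: "\<exists>i e. i < 6 \<and> e \<noteq> 0 \<and> Mlist A B ! i = [e * - real_of_int (snd x), e * real_of_int (fst x), - (e * - real_of_int (snd x)), - (e * real_of_int (fst x))]"
    proof -
      have "x = w 8 \<or> x = w 6" using x by blast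
      then show ?thesis
      proof
        assume e: "x = w 8"
        show ?thesis unfolding e by (rule exI[of _ 4], rule exI[of _ "-1"]) (use R(7) in simp)
      next
        assume e: "x = w 6"
        show ?thesis unfolding e by (rule exI[of _ 5], rule exI[of _ "1"]) (use R(8) in simp)
      qed
    qed
    obtain i e1 where i: "i < 6" "e1 \<noteq> 0" "Mlist A B ! i = [e1 * - real_of_int (snd u), e1 * real_of_int (fst u), 0, 0]"
      using ri by blast
    obtain j e2 where j: "j < 6" "e2 \<noteq> 0" "Mlist A B ! j = [0, 0, e2 * - real_of_int (snd v), e2 * real_of_int (fst v)]"
      using rj by blast
    obtain k e3 where k: "k < 6" "e3 \<noteq> 0" "Mlist A B ! k = [e3 * - real_of_int (snd x), e3 * real_of_int (fst x), - (e3 * - real_of_int (snd x)), - (e3 * real_of_int (fst x))]"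
      using rk by blast
    show "det2 u x = 0 \<and> det2 v x = 0"
      by (rule F4_gen[OF r i(1) j(1) k(1) i(3) j(3) k(3) i(2) j(2) k(2) nu nv])
  qed
  show ?thesis unfolding QR_def using G1 G2 G3 G4 by blast
qed

lemma mat_eq_ent:
  fixes A A' :: "int^3^3"
  assumes "\<And>k. k \<in> {1..9} \<Longrightarrow> ent A k = ent A' k"
  shows "A = A'"
proof -
  have e: "ent A k = ent A' k" if "k \<in> {1,2,3,4,5,6,7,8,9}" for k using assms that by auto
  have "A $ i $ j = A' $ i $ j" for i j
    using exhaust_3[of i] exhaust_3[of j] e[of 1] e[of 2] e[of 3] e[of 4] e[of 5] e[of 6] e[of 7] e[of 8] e[of 9]
    by (auto simp: ent_simps)
  then show ?thesis by (simp add: vec_eq_iff)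
qed

lemma box_mono: "K \<le> L \<Longrightarrow> sqbox K \<subseteq> sqbox L" by (auto simp: sqbox_def)

lemma sub2_box: "u \<in> sqbox K \<Longrightarrow> v \<in> sqbox K \<Longrightarrow> sub2 u v \<in> sqbox (2*K)"
  by (auto simp: sqbox_def sub2_def)

definition phi :: "(int^3^3) \<times> (int^3^3) \<Rightarrow> v2 \<times> (tup6 \<times> v2 \<times> v2)" where
  "phi p = (let w = wv (fst p) (snd p) in
     (w 1, (((w 2, w 4), (w 3, w 7), (w 8, w 6)), sub2 (w 5) (w 1), sub2 (w 9) (w 1))))"

lemma phi_maps: "phi ` S2 N \<subseteq> sqbox N \<times> Q (2*N)"
proof
  fix z assume "z \<in> phi ` S2 N"
  then obtain A B where p: "(A,B) \<in> S2 N" and z: "z = phi (A,B)" by auto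
  define w where "w = wv A B"
  have bnd: "\<bar>A $ i $ j\<bar> \<le> int N" "\<bar>B $ i $ j\<bar> \<le> int N" for i j using p by (auto simp: S2_def)
  have ea: "\<bar>ent A k\<bar> \<le> int N" "\<bar>ent B k\<bar> \<le> int N" for k
    unfolding ent_def by (rule bnd(1), rule bnd(2))
  have wb: "w k \<in> sqbox N" for k
    using ea[of k] by (simp add: w_def wv_def sqbox_def abs_le_iff)
  have wb2: "w k \<in> sqbox (2*N)" for k using wb box_mono[of N "2*N"] by auto
  have com: "A ** B = B ** A" and rk: "rank (Mmat A B) = 2" using p by (auto simp: S2_def)
  have QE: "QE (2*N) (w 2) (w 4) (w 3) (w 7) (w 8) (w 6) (sub2 (w 5) (w 1)) (sub2 (w 9) (w 1))"
    unfolding QE_def using wb2 sub2_box[OF wb wb] QE_eqs[OF com, folded w_def] by simp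
  have QR: "QR (w 2) (w 4) (w 3) (w 7) (w 8) (w 6)"
    using rank_QR[of A B] rk by (simp add: w_def)
  show "z \<in> sqbox N \<times> Q (2*N)"
    using z wb QE QR by (simp add: phi_def Let_def w_def[symmetric] Q_def QP_def)
qed

lemma phi_inj: "inj_on phi (S2 N)"
proof (rule inj_onI)
  fix p p' assume "p \<in> S2 N" "p' \<in> S2 N" and e: "phi p = phi p'"
  obtain A B where p: "p = (A,B)" by fastforce
  obtain A' B' where p': "p' = (A',B')" by fastforce
  have e1: "wv A B k = wv A' B' k" if "k \<in> {1,2,3,4,6,7,8}" for k
    using e that by (auto simp: phi_def Let_def p p')
  have e5: "sub2 (wv A B 5) (wv A B 1) = sub2 (wv A' B' 5) (wv A' B' 1)"
    and e9: "sub2 (wv A B 9) (wv A B 1) = sub2 (wv A' B' 9) (wv A' B' 1)"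
    using e by (auto simp: phi_def Let_def p p')
  have "wv A B k = wv A' B' k" if "k \<in> {1..9}" for k
  proof -
    have "k \<in> {1,2,3,4,6,7,8} \<or> k = 5 \<or> k = 9" using that by auto
    then show ?thesis
    proof (elim disjE)
      assume "k = 5" then show ?thesis using e5 e1[of 1] by (auto simp: sub2_def prod_eq_iff)
    next
      assume "k = 9" then show ?thesis using e9 e1[of 1] by (auto simp: sub2_def prod_eq_iff)
    qed (use e1 in blast)
  qed
  then have "ent A k = ent A' k \<and> ent B k = ent B' k" if "k \<in> {1..9}" for k
    using that by (simp add: wv_def)
  then have "A = A'" "B = B'" by (auto intro: mat_eq_ent)
  then show "p = p'" using p p' by simp
qed

theorem lemma4p3:
  shows "\<exists>C>0. \<forall>N::nat. N \<ge> 1 \<longrightarrow> real (card (S2 N)) \<le> C * real N ^ 10"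
proof (intro exI[of _ "9 * 200000 * 5^8"] conjI allI impI)
  show "(0::real) < 9 * 200000 * 5^8" by simp
  fix N :: nat assume N: "N \<ge> 1"
  have fin: "finite (sqbox N \<times> Q (2*N))" using finite_Q by simp
  have "card (S2 N) = card (phi ` S2 N)" by (rule card_image[OF phi_inj, symmetric])
  also have "\<dots> \<le> card (sqbox N \<times> Q (2*N))" by (rule card_mono[OF fin phi_maps])
  also have "\<dots> = (2*N+1)^2 * card (Q (2*N))" by (simp add: card_cartesian_product card_box)
  finally have c: "real (card (S2 N)) \<le> real ((2*N+1)^2 * card (Q (2*N)))" by (rule of_nat_mono)
  have n1: "real N \<ge> 1" using N by simp
  have "real ((2*N+1)^2 * card (Q (2*N))) = (2 * real N + 1)^2 * real (card (Q (2*N)))" by simp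
  also have "\<dots> \<le> (2 * real N + 1)^2 * (200000 * (2 * real (2*N) + 1)^8)"
    by (intro mult_left_mono card_Q) simp
  also have "\<dots> \<le> (3 * real N)^2 * (200000 * (5 * real N)^8)"
  proof (intro mult_mono power_mono mult_left_mono)
    show "2 * real N + 1 \<le> 3 * real N" using n1 by simp
    show "2 * real (2*N) + 1 \<le> 5 * real N" using n1 by simp
  qed simp_all
  also have "\<dots> = 9 * 200000 * 5^8 * real N ^ 10"
    by (simp add: power_mult_distrib eval_nat_numeral algebra_simps)
  finally show "real (card (S2 N)) \<le> 9 * 200000 * 5^8 * real N ^ 10" using c by linarith
qed

end
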